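(* Let $d\ge2$, $r=\sin\!\left(\frac{2\pi}{(d-1)d^2}\right)$, $0<\alpha<1$, and $$\beta=\frac{r^{\frac{(d-1)d}{2}}\left(\frac{d-1}{2d}\right)^d\frac{2}{d-1}}{\prod_{k=1}^{d-1}(r^k+1)}.$$ There is a map $R:\mathbb R^{6d-3}\to\mathcal P_d$ (depending only on $d$ and $\alpha$) such that for every $p\in\mathcal P_d$ with $\|p\|_2=1$ and every $\epsilon\in\mathbb R^{6d-3}$ with $\|\epsilon\|_\infty\le\frac{\alpha\beta^2}{2d-1}$, setting $\tilde C=\frac{(1+\sqrt2)(2d-1)\|\epsilon\|_\infty+d}{\beta^2(1-\alpha)}$, the polynomial $\tilde p=R(\widetilde{\mathcal A}(p,\epsilon))$ satisfies, for some $c_0$ with $|c_0|=1$, $$\|\tilde p-c_0p\|_2\le\left(\frac{2+\sqrt2}{\beta^2(1-\alpha)}\,\frac{d-d\tilde C-1+\tilde C^d}{1-\tilde C}\sqrt d+\frac{1-\tilde C^d}{2\beta\sqrt{\frac1{\sqrt d}(1-\alpha)}}\right)\frac{d(2d-1)}{1-\tilde C}\,\|\epsilon\|_\infty.$$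
   Context: $\mathcal P_d$ is the space of complex polynomials of degree at most $d-1$ on the unit circle with inner product $\langle p,q\rangle=\frac1{2\pi}\int_0^{2\pi}p(e^{it})\overline{q(e^{it})}dt$ ($\|p\|_2$ equals the Euclidean norm of the coefficient vector). Let $\omega=e^{2\pi i/(2d-1)}$, $\nu=e^{2\pi i/d}$. The map $\mathcal A:\mathcal P_d\to\mathbb R^{6d-3}$ is $(\mathcal A(p))_j=|p(\omega^j)|^2$ ($1\le j\le 2d-1$), $|p(\omega^j)-p(\omega^j\nu)|^2$ ($2d\le j\le4d-2$), $|p(\omega^j)-ip(\omega^j\nu)|^2$ ($4d-1\le j\le 6d-3$), and $\widetilde{\mathcal A}(p,\epsilon)=\mathcal A(p)+\epsilon$; $\|\epsilon\|_\infty=\max_j|\epsilon_j|$. *)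

theory Defs
  imports "HOL-Analysis.Analysis"
begin

text \<open>A polynomial p in P_d is represented by its coefficient function
  c :: nat => complex with c k = 0 for k >= d; p(z) = sum_{k<d} c k z^k.\<close>

definition in_Pd :: "nat \<Rightarrow> (nat \<Rightarrow> complex) \<Rightarrow> bool" where
  "in_Pd d c \<longleftrightarrow> (\<forall>k\<ge>d. c k = 0)"

definition peval :: "nat \<Rightarrow> (nat \<Rightarrow> complex) \<Rightarrow> complex \<Rightarrow> complex" where
  "peval d c z = (\<Sum>k<d. c k * z ^ k)"

definition pnorm2 :: "nat \<Rightarrow> (nat \<Rightarrow> complex) \<Rightarrow> real" where
  "pnorm2 d c = sqrt (\<Sum>k<d. (cmod (c k))\<^sup>2)"

definition omega :: "nat \<Rightarrow> complex" where
  "omega d = cis (2 * pi / real (2 * d - 1))"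

definition nu :: "nat \<Rightarrow> complex" where
  "nu d = cis (2 * pi / real d)"

text \<open>The measurement map A, vectors of R^(6d-3) are represented as
  functions nat => real on the index set {1..6d-3} (value 0 outside).\<close>
definition meas :: "nat \<Rightarrow> (nat \<Rightarrow> complex) \<Rightarrow> nat \<Rightarrow> real" where
  "meas d c j =
     (if 1 \<le> j \<and> j \<le> 2*d - 1 then (cmod (peval d c (omega d ^ j)))\<^sup>2
      else if 2*d \<le> j \<and> j \<le> 4*d - 2 then
        (cmod (peval d c (omega d ^ j) - peval d c (omega d ^ j * nu d)))\<^sup>2
      else if 4*d - 1 \<le> j \<and> j \<le> 6*d - 3 then
        (cmod (peval d c (omega d ^ j) - \<i> * peval d c (omega d ^ j * nu d)))\<^sup>2
      else 0)"

definition noisy_meas :: "nat \<Rightarrow> (nat \<Rightarrow> complex) \<Rightarrow> (nat \<Rightarrow> real) \<Rightarrow> nat \<Rightarrow> real" where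
  "noisy_meas d c eps j = (if 1 \<le> j \<and> j \<le> 6*d - 3 then meas d c j + eps j else 0)"

definition supnorm :: "nat \<Rightarrow> (nat \<Rightarrow> real) \<Rightarrow> real" where
  "supnorm d eps = Max ((\<lambda>j. \<bar>eps j\<bar>) ` {1..6*d - 3})"

definition rconst :: "nat \<Rightarrow> real" where
  "rconst d = sin (2 * pi / (real (d - 1) * real d ^ 2))"

definition betaconst :: "nat \<Rightarrow> real" where
  "betaconst d = (let r = rconst d in
     r powr (real ((d - 1) * d) / 2) * ((real d - 1) / (2 * real d)) ^ d * (2 / (real d - 1))
     / (\<Prod>k\<in>{1..d-1}. r ^ k + 1))"

end

theory Submission
  imports Defs "HOL-Computational_Algebra.Fundamental_Theorem_Algebra"
begin


lemma cis_eq_1_iff': "cis a = 1 \<longleftrightarrow> (\<exists>n::int. a = of_int n * (2 * pi))"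
proof
  assume "cis a = 1"
  hence "cos a = 1" by (metis cis.sel(1) one_complex.sel(1))
  thus "\<exists>n::int. a = of_int n * (2 * pi)" by (auto simp: cos_one_2pi_int mult.assoc)
next
  assume "\<exists>n::int. a = of_int n * (2 * pi)"
  then obtain n::int where "a = of_int n * (2 * pi)" by blast
  hence "a = 2 * pi * of_int n" by simp
  thus "cis a = 1" by simp
qed

lemma orth_int:
  fixes M :: nat and l :: int
  assumes "M \<ge> 1"
  shows "(\<Sum>i<M. cis (2 * pi * of_int l / M) ^ i) = (if int M dvd l then of_nat M else 0)"
proof (cases "int M dvd l")
  case True
  then obtain k where k: "l = int M * k" by auto
  have "cis (2 * pi * of_int l / M) = 1"
    using assms unfolding cis_eq_1_iff' by (intro exI[of _ k]) (simp add: k)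
  then show ?thesis using True by simp
next
  case False
  let ?y = "cis (2 * pi * of_int l / M)"
  have y1: "?y \<noteq> 1"
  proof
    assume "?y = 1"
    then obtain n where n: "2 * pi * of_int l / M = of_int n * (2 * pi)" by (auto simp: cis_eq_1_iff')
    hence "of_int l = of_int n * (real M)" using assms by (simp add: field_simps)
    hence "l = n * int M" by (metis of_int_eq_iff of_int_mult of_int_of_nat_eq)
    thus False using False by simp
  qed
  have "?y ^ M = cis (real M * (2 * pi * of_int l / M))" by (rule Complex.DeMoivre)
  also have "real M * (2 * pi * of_int l / M) = 2 * pi * of_int l" using assms by simp
  also have "cis (2 * pi * of_int l) = 1" by simp
  finally show ?thesis using y1 False by (simp add: sum_gp_strict)
qed


lemma root_prod_cis:
  fixes M n m :: nat
  shows "cis (2*pi/M)^n * cnj (cis (2*pi/M))^m = cis (2 * pi * of_int (int n - int m) / M)"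
  by (simp add: Complex.DeMoivre cis_cnj cis_mult flip: cis_power_int) (simp add: algebra_simps add_divide_distrib diff_divide_distrib)

lemma mod_eq_iff_dvd_int: "n mod M = m mod (M::nat) \<longleftrightarrow> int M dvd (int n - int m)"
  by (metis mod_eq_dvd_iff of_nat_mod of_nat_eq_iff)

lemma orth0:
  fixes M n m :: nat
  assumes "M \<ge> 1"
  shows "(\<Sum>i<M. (cis(2*pi/M)^n * cnj (cis(2*pi/M))^m)^i) = (if n mod M = m mod M then of_nat M else 0)"
  unfolding root_prod_cis orth_int[OF assms] mod_eq_iff_dvd_int by simp

lemma orth_one:
  fixes M n m :: nat
  assumes "M \<ge> 1" "n mod M = m mod M"
  shows "cis(2*pi/M)^n * cnj (cis(2*pi/M))^m = 1"
proof -
  from assms(2) obtain k where k: "int n - int m = int M * k" unfolding mod_eq_iff_dvd_int by auto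
  show ?thesis unfolding root_prod_cis k using assms(1) unfolding cis_eq_1_iff'
    by (intro exI[of _ k]) simp
qed

lemma orth1:
  fixes M n m :: nat
  assumes "M \<ge> 1"
  shows "(\<Sum>i\<in>{1..M}. (cis(2*pi/M)^n * cnj (cis(2*pi/M))^m)^i) = (if n mod M = m mod M then of_nat M else 0)"
proof -
  let ?y = "cis(2*pi/M)^n * cnj (cis(2*pi/M))^m"
  have "{1..M} = Suc ` {..<M}" by (simp add: atLeast1_atMost_eq_remove0 lessThan_Suc_atMost[symmetric] image_Suc_lessThan)
  hence "(\<Sum>i\<in>{1..M}. ?y^i) = (\<Sum>i<M. ?y^Suc i)" by (simp add: sum.reindex)
  also have "\<dots> = ?y * (\<Sum>i<M. ?y^i)" by (simp add: sum_distrib_left)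
  finally show ?thesis using orth0[OF assms, of n m] orth_one[OF assms, of n m] by auto
qed


definition Kern :: "nat \<Rightarrow> complex \<Rightarrow> complex \<Rightarrow> complex" where
  "Kern d z w = (cnj z * w)^(d-1) * (\<Sum>k<2*d-1. (z * cnj w)^k)"
definition interp :: "nat \<Rightarrow> (nat \<Rightarrow> complex) \<Rightarrow> complex \<Rightarrow> complex" where
  "interp d f z = (\<Sum>i\<in>{1..2*d-1}. f i * Kern d z (omega d ^ i)) / of_nat (2*d-1)"
definition bil :: "nat \<Rightarrow> (nat \<Rightarrow> nat \<Rightarrow> complex) \<Rightarrow> complex \<Rightarrow> complex" where
  "bil d t z = (\<Sum>a<d. \<Sum>b<d. t a b * z^a * cnj z^b)"

lemma modcond:
  fixes a b k d :: nat
  assumes "d \<ge> 1" "a < d" "b < d" "k < 2*d-1"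
  shows "(a+d-1) mod (2*d-1) = (b+k) mod (2*d-1) \<longleftrightarrow> k = a+d-1-b"
proof -
  have 1: "(a+d-1) mod (2*d-1) = a+d-1" using assms by simp
  show ?thesis
  proof (cases "b + k < 2*d-1")
    case True
    then show ?thesis using 1 assms by auto
  next
    case False
    hence "(b+k) mod (2*d-1) = b+k-(2*d-1)" using assms by (simp add: le_mod_geq)
    then show ?thesis using 1 assms False by auto
  qed
qed

lemma omega_cis: "omega d = cis (2*pi/real (2*d-1))" by (simp add: omega_def)

lemma term_expand:
  assumes "d \<ge> 1"
  shows "(w^i)^a * cnj (w^i)^b * Kern d z (w ^ i) =
    (\<Sum>k<2*d-1. cnj z^(d-1) * z^k * (w^(a+d-1) * cnj w^(b+k))^i)"
proof -
  obtain D where D: "d = Suc D" using assms by (cases d) auto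
  show ?thesis
  unfolding Kern_def sum_distrib_left D
  by (rule sum.cong[OF refl]) (simp add: power_mult_distrib power_add flip: power_mult, simp add: mult_ac)
qed

lemma mono_term:
  assumes "d \<ge> 1" "cmod z = 1" "a < d" "b < d"
  shows "(\<Sum>i\<in>{1..2*d-1}. (omega d^i)^a * cnj (omega d^i)^b * Kern d z (omega d ^ i)) / of_nat (2*d-1)
      = z^a * cnj z^b"
proof -
  let ?N = "2*d-1"
  have N1: "?N \<ge> 1" using assms by simp
  have "(\<Sum>i\<in>{1..?N}. (omega d^i)^a * cnj (omega d^i)^b * Kern d z (omega d ^ i))
     = (\<Sum>i\<in>{1..?N}. \<Sum>k<?N. cnj z^(d-1) * z^k * (omega d^(a+d-1) * cnj (omega d)^(b+k))^i)"
    by (rule sum.cong[OF refl], rule term_expand[OF assms(1)])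
  also have "\<dots> = (\<Sum>k<?N. cnj z^(d-1) * z^k * (\<Sum>i\<in>{1..?N}. (omega d^(a+d-1) * cnj (omega d)^(b+k))^i))"
    by (subst sum.swap) (simp add: sum_distrib_left)
  also have "\<dots> = (\<Sum>k<?N. if k = a+d-1-b then cnj z^(d-1) * z^k * of_nat ?N else 0)"
    apply (rule sum.cong[OF refl])
    subgoal for k using modcond[OF assms(1,3,4), of k] by (simp only: omega_cis orth1[OF N1]) auto
    done
  also have "\<dots> = cnj z^(d-1) * z^(a+d-1-b) * of_nat ?N"
    using assms by (subst sum.delta) auto
  finally have eq0: "(\<Sum>i\<in>{1..?N}. (omega d^i)^a * cnj (omega d^i)^b * Kern d z (omega d ^ i))
     = cnj z^(d-1) * z^(a+d-1-b) * of_nat ?N" .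
  have Nnz: "(of_nat ?N :: complex) \<noteq> 0" using N1 by (simp only: of_nat_eq_0_iff)
  have eq: "(\<Sum>i\<in>{1..?N}. (omega d^i)^a * cnj (omega d^i)^b * Kern d z (omega d ^ i)) / of_nat ?N
     = cnj z^(d-1) * z^(a+d-1-b)" by (simp only: eq0 nonzero_mult_div_cancel_right[OF Nnz])
  have zz: "z * cnj z = 1" using assms(2) by (metis complex_norm_square mult.commute of_real_1 power_one)
  have "cnj z^(d-1) * z^(a+d-1-b) = (z*cnj z)^(d-1-b) * (z^a * cnj z^b)"
  proof -
    have "a+d-1-b = a + (d-1-b)" "d - 1 = (d-1-b) + b" using assms by auto
    hence "cnj z^(d-1) * z^(a+d-1-b) = cnj z^((d-1-b)+b) * z^(a + (d-1-b))" by metis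
    thus ?thesis by (simp add: power_add power_mult_distrib mult_ac)
  qed
  thus ?thesis using eq zz by simp
qed


lemma swap3: "(\<Sum>i\<in>I. (\<Sum>a\<in>A. \<Sum>b\<in>B. f a b i)) = (\<Sum>a\<in>A. \<Sum>b\<in>B. \<Sum>i\<in>I. f a b i)"
  by (subst sum.swap) (simp add: sum.swap[of _ I])

lemma reproduce:
  assumes "d \<ge> 1" "cmod z = 1"
  shows "interp d (\<lambda>i. bil d t (omega d ^ i)) z = bil d t z"
proof -
  let ?I = "{1..2*d-1}" and ?K = "\<lambda>i. Kern d z (omega d ^ i)"
  have "interp d (\<lambda>i. bil d t (omega d ^ i)) z =
     (\<Sum>i\<in>?I. (\<Sum>a<d. \<Sum>b<d. t a b * ((omega d^i)^a * cnj (omega d^i)^b * ?K i))) / of_nat (2*d-1)"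
    unfolding interp_def bil_def sum_distrib_right by (intro arg_cong2[where f="(/)"] sum.cong refl) (simp add: mult_ac)
  also have "\<dots> = (\<Sum>a<d. \<Sum>b<d. t a b * ((\<Sum>i\<in>?I. (omega d^i)^a * cnj (omega d^i)^b * ?K i) / of_nat (2*d-1)))"
    apply (subst swap3) apply (simp only: sum_divide_distrib) apply (intro sum.cong refl) by (simp add: sum_distrib_left)
  also have "\<dots> = (\<Sum>a<d. \<Sum>b<d. t a b * (z^a * cnj z^b))"
    apply (intro sum.cong refl)
    subgoal for a b by (rule arg_cong[where f="\<lambda>x. t a b * x"], rule mono_term[OF assms]) auto
    done
  finally show ?thesis unfolding bil_def by (simp add: mult_ac)
qed

lemma Kern_bound:
  assumes "d \<ge> 1" "cmod z = 1" "cmod w = 1"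
  shows "cmod (Kern d z w) \<le> real (2*d-1)"
proof -
  have "cmod (\<Sum>k<2*d-1. (z * cnj w)^k) \<le> (\<Sum>k<2*d-1. cmod ((z * cnj w)^k))" by (rule norm_sum)
  also have "\<dots> = 2*d-1" using assms by (simp add: norm_mult norm_power)
  finally show ?thesis unfolding Kern_def using assms by (simp add: norm_mult norm_power)
qed

lemma interp_bound:
  assumes "d \<ge> 1" "cmod z = 1" "\<And>i. i \<in> {1..2*d-1} \<Longrightarrow> cmod (f i) \<le> \<epsilon>"
  shows "cmod (interp d f z) \<le> real (2*d-1) * \<epsilon>"
proof -
  have "1 \<in> {1..2*d-1}" using assms(1) by simp
  hence eps: "\<epsilon> \<ge> 0" using assms(3) order_trans[OF norm_ge_zero] by blast
  have "cmod (\<Sum>i\<in>{1..2*d-1}. f i * Kern d z (omega d ^ i)) \<le> (\<Sum>i\<in>{1..2*d-1}. cmod (f i * Kern d z (omega d ^ i)))"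
    by (rule norm_sum)
  also have "\<dots> \<le> (\<Sum>i\<in>{1..2*d-1}. \<epsilon> * (2*d-1))"
  proof (rule sum_mono)
    fix i assume i: "i \<in> {1..2*d-1}"
    have "cmod (Kern d z (omega d ^ i)) \<le> 2*d-1"
      by (rule Kern_bound) (use assms in \<open>auto simp: omega_def norm_power\<close>)
    thus "cmod (f i * Kern d z (omega d ^ i)) \<le> \<epsilon> * (2*d-1)" unfolding norm_mult
      by (intro mult_mono assms(3) i) (auto simp: eps)
  qed
  also have "\<dots> = (2*d-1) * ((2*d-1) * \<epsilon>)" by simp
  finally have 1: "cmod (\<Sum>i\<in>{1..2*d-1}. f i * Kern d z (omega d ^ i)) \<le> (2*d-1) * ((2*d-1) * \<epsilon>)" .
  have N: "real (2*d-1) > 0" using assms by simp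
  have "cmod (interp d f z) = cmod (\<Sum>i\<in>{1..2*d-1}. f i * Kern d z (omega d ^ i)) / real (2*d-1)"
    unfolding interp_def norm_divide norm_of_nat ..
  also have "\<dots> \<le> (2*d-1) * ((2*d-1) * \<epsilon>) / real (2*d-1)"
    using 1 N by (intro divide_right_mono) auto
  also have "\<dots> = (2*d-1) * \<epsilon>" using N by simp
  finally show ?thesis .
qed


lemma interp_diff: "interp d (\<lambda>i. f i - g i) z = interp d f z - interp d g z"
  unfolding interp_def by (simp add: sum_subtractf ring_distribs diff_divide_distrib sum.distrib)

lemma G_bil: "peval d c z * cnj (peval d c z) = bil d (\<lambda>a b. c a * cnj (c b)) z"
  unfolding peval_def bil_def cnj_sum sum_product by (simp add: mult_ac)

lemma F_bil: "peval d c z * cnj (peval d c (z * nu d)) = bil d (\<lambda>a b. c a * cnj (c b) * cnj (nu d)^b) z"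
  unfolding peval_def bil_def cnj_sum sum_product
  by (intro sum.cong refl) (simp add: power_mult_distrib)



lemma pow_swap: "(w^i)^a * cnj (w^i)^b = (w^a * cnj w^b)^(i::nat)"
  by (simp add: power_mult_distrib flip: power_mult) (simp add: mult.commute)

lemma bil_mean:
  assumes "d \<ge> 1"
  shows "(\<Sum>i\<in>{1..2*d-1}. bil d t (omega d^i)) = of_nat (2*d-1) * (\<Sum>a<d. t a a)"
proof -
  have N1: "2*d-1 \<ge> 1" using assms by simp
  have "(\<Sum>i\<in>{1..2*d-1}. bil d t (omega d^i)) = (\<Sum>a<d. \<Sum>b<d. \<Sum>i\<in>{1..2*d-1}. t a b * (omega d^i)^a * cnj (omega d^i)^b)"
    unfolding bil_def by (rule swap3)
  also have "\<dots> = (\<Sum>a<d. \<Sum>b<d. t a b * (\<Sum>i\<in>{1..2*d-1}. (omega d^a * cnj (omega d)^b)^i))"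
    by (intro sum.cong refl) (simp only: sum_distrib_left mult.assoc pow_swap)
  also have "\<dots> = (\<Sum>a<d. \<Sum>b<d. t a b * (if a = b then of_nat (2*d-1) else 0))"
    apply (intro sum.cong refl)
    subgoal for a b using assms by (simp only: omega_cis orth1[OF N1]) auto
    done
  also have "\<dots> = (\<Sum>a<d. t a a * of_nat (2*d-1))"
    by (intro sum.cong refl) (simp add: if_distrib sum.delta cong: if_cong)
  finally show ?thesis by (simp add: sum_distrib_right mult_ac)
qed


lemma nu_cis: "nu d = cis (2*pi/real d)" by (simp add: nu_def)

lemma pow_swap2: "((z::complex) * w^k)^b * cnj (z * w^k)^a = z^b * cnj z^a * (w^b * cnj w^a)^k"
  by (simp add: power_mult_distrib flip: power_mult) (simp add: mult_ac)

lemma dft_reproduce: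
  assumes "d \<ge> 1" "cmod z0 = 1" "a < d"
  shows "(\<Sum>k<d. peval d h (z0*nu d^k) * cnj (z0*nu d^k)^a) / of_nat d = h a"
proof -
  have "(\<Sum>k<d. peval d h (z0*nu d^k) * cnj (z0*nu d^k)^a) = (\<Sum>b<d. \<Sum>k<d. h b * ((z0*nu d^k)^b * cnj (z0*nu d^k)^a))"
    unfolding peval_def sum_distrib_right by (subst sum.swap) (simp add: mult.assoc)
  also have "\<dots> = (\<Sum>b<d. h b * z0^b * cnj z0^a * (\<Sum>k<d. (nu d^b * cnj (nu d)^a)^k))"
    by (intro sum.cong refl) (simp only: pow_swap2 sum_distrib_left mult.assoc complex_cnj_power)
  also have "\<dots> = (\<Sum>b<d. if b = a then h b * z0^b * cnj z0^a * of_nat d else 0)"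
    apply (intro sum.cong refl)
    subgoal for b using assms by (simp only: nu_cis orth0) auto
    done
  also have "\<dots> = h a * (z0 * cnj z0)^a * of_nat d" using assms by (simp add: power_mult_distrib mult_ac)
  also have "z0 * cnj z0 = 1" using assms(2) by (metis complex_norm_square mult.commute of_real_1 power_one)
  finally show ?thesis using assms by simp
qed

lemma dft_parseval_c:
  assumes "d \<ge> 1" "cmod z0 = 1"
  shows "(\<Sum>a<d. (\<Sum>k<d. g k * cnj (z0*nu d^k)^a) * cnj (\<Sum>k<d. g k * cnj (z0*nu d^k)^a))
     = of_nat d * (\<Sum>k<d. g k * cnj (g k))"
proof -
  have zz: "z0 * cnj z0 = 1" using assms(2) by (metis complex_norm_square mult.commute of_real_1 power_one)
  have e1: "cnj (z0*nu d^k) * (z0*nu d^l) = (z0 * cnj z0) * (nu d^l * cnj (nu d)^k)" for k l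
    by (simp add: mult_ac)
  have e: "cnj (z0*nu d^k)^a * (z0*nu d^l)^a = (nu d^l * cnj (nu d)^k)^a" for k l a
    by (simp only: power_mult_distrib[symmetric] e1 zz mult_1)
  have t: "(\<Sum>k<d. g k * cnj (z0*nu d^k)^a) * cnj (\<Sum>k<d. g k * cnj (z0*nu d^k)^a)
      = (\<Sum>k<d. \<Sum>l<d. g k * cnj (g l) * (cnj (z0*nu d^k)^a * (z0*nu d^l)^a))" for a
    unfolding cnj_sum sum_product by (intro sum.cong refl) (simp add: mult_ac)
  have "(\<Sum>a<d. (\<Sum>k<d. g k * cnj (z0*nu d^k)^a) * cnj (\<Sum>k<d. g k * cnj (z0*nu d^k)^a))
     = (\<Sum>a<d. \<Sum>k<d. \<Sum>l<d. g k * cnj (g l) * (cnj (z0*nu d^k)^a * (z0*nu d^l)^a))"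
    by (simp only: t)
  also have "\<dots> = (\<Sum>k<d. \<Sum>l<d. \<Sum>a<d. g k * cnj (g l) * (cnj (z0*nu d^k)^a * (z0*nu d^l)^a))"
    by (rule swap3)
  also have "\<dots> = (\<Sum>k<d. \<Sum>l<d. g k * cnj (g l) * (\<Sum>a<d. (nu d^l * cnj (nu d)^k)^a))"
    by (simp only: e sum_distrib_left)
  also have "\<dots> = (\<Sum>k<d. \<Sum>l<d. if l = k then g k * cnj (g l) * of_nat d else 0)"
    apply (intro sum.cong refl)
    subgoal for k l using assms by (simp only: nu_cis orth0) auto
    done
  also have "\<dots> = of_nat d * (\<Sum>k<d. g k * cnj (g k))"
    by (simp add: sum_distrib_left mult_ac)
  finally show ?thesis .
qed

lemma dft_parseval:
  assumes "d \<ge> 1" "cmod z0 = 1"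
  shows "(\<Sum>a<d. (cmod ((\<Sum>k<d. g k * cnj (z0*nu d^k)^a) / of_nat d))\<^sup>2) = (\<Sum>k<d. (cmod (g k))\<^sup>2) / d"
proof -
  let ?S = "\<lambda>a. (\<Sum>k<d. g k * cnj (z0*nu d^k)^a)"
  have "complex_of_real (\<Sum>a<d. (cmod (?S a / of_nat d))\<^sup>2) = (\<Sum>a<d. (?S a / of_nat d) * cnj (?S a / of_nat d))"
    by (simp only: of_real_sum complex_norm_square)
  also have "\<dots> = (\<Sum>a<d. ?S a * cnj (?S a) / (of_nat d)^2)"
    by (intro sum.cong refl) (simp only: power2_eq_square complex_cnj_divide complex_cnj_of_nat times_divide_times_eq)
  also have "\<dots> = (\<Sum>a<d. ?S a * cnj (?S a)) / (of_nat d)^2"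
    by (rule sum_divide_distrib[symmetric])
  also have "\<dots> = (\<Sum>k<d. g k * cnj (g k)) / of_nat d"
    unfolding dft_parseval_c[OF assms] using assms by (simp add: power2_eq_square)
  also have "\<dots> = complex_of_real ((\<Sum>k<d. (cmod (g k))\<^sup>2) / d)"
    by (simp only: of_real_sum complex_norm_square of_real_divide of_real_of_nat_eq sum_divide_distrib)
  finally show ?thesis using of_real_eq_iff by blast
qed


lemma LB1:
  assumes "cmod w = 1" "cmod u = 1" "cmod (w - u) \<ge> s" "s \<ge> 0" "\<rho> \<ge> 0"
  shows "(cmod (w - of_real \<rho> * u))\<^sup>2 \<ge> (s\<^sup>2 - s^4/4) * (max 1 \<rho>)\<^sup>2"
proof -
  define c where "c = Re w * Re u + Im w * Im u"
  have w: "(Re w)\<^sup>2 + (Im w)\<^sup>2 = 1" using assms(1) by (metis cmod_power2 one_power2)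
  have u: "(Re u)\<^sup>2 + (Im u)\<^sup>2 = 1" using assms(2) by (metis cmod_power2 one_power2)
  have d1: "(cmod (w - u))\<^sup>2 = 2 - 2*c" unfolding cmod_power2 c_def using w u
    by (simp add: power2_eq_square algebra_simps)
  have "(cmod (w - of_real \<rho> * u))\<^sup>2 = ((Re w)\<^sup>2 + (Im w)\<^sup>2) + \<rho>\<^sup>2 * ((Re u)\<^sup>2 + (Im u)\<^sup>2) - 2*\<rho>*c"
    unfolding cmod_power2 c_def by (simp add: power2_eq_square algebra_simps)
  hence d2: "(cmod (w - of_real \<rho> * u))\<^sup>2 = 1 + \<rho>\<^sup>2 - 2*\<rho>*c" using w u by simp
  define c0 where "c0 = 1 - s\<^sup>2/2"
  have "s\<^sup>2 \<le> (cmod (w - u))\<^sup>2" using assms(3,4) by (simp add: power_mono)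
  hence cc: "c \<le> c0" unfolding c0_def d1 by simp
  have e: "s\<^sup>2 - s^4/4 = 1 - c0\<^sup>2" unfolding c0_def by (simp add: power2_eq_square power4_eq_xxxx field_simps)
  have "1 + \<rho>\<^sup>2 - 2*\<rho>*c \<ge> 1 + \<rho>\<^sup>2 - 2*\<rho>*c0" using cc assms(5) by (simp add: mult_left_mono)
  moreover have "1 + \<rho>\<^sup>2 - 2*\<rho>*c0 \<ge> (1 - c0\<^sup>2) * (max 1 \<rho>)\<^sup>2"
  proof (cases "\<rho> \<le> 1")
    case True
    hence "(1 - c0\<^sup>2) * (max 1 \<rho>)\<^sup>2 = 1 - c0\<^sup>2" by simp
    moreover have "1 + \<rho>\<^sup>2 - 2*\<rho>*c0 - (1 - c0\<^sup>2) = (\<rho> - c0)\<^sup>2" by (simp add: power2_eq_square algebra_simps)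
    ultimately show ?thesis by (metis diff_ge_0_iff_ge zero_le_power2)
  next
    case False
    hence "(1 - c0\<^sup>2) * (max 1 \<rho>)\<^sup>2 = (1 - c0\<^sup>2) * \<rho>\<^sup>2" by simp
    moreover have "1 + \<rho>\<^sup>2 - 2*\<rho>*c0 - (1 - c0\<^sup>2) * \<rho>\<^sup>2 = (1 - \<rho>*c0)\<^sup>2" by (simp add: power2_eq_square algebra_simps)
    ultimately show ?thesis by (metis diff_ge_0_iff_ge zero_le_power2)
  qed
  ultimately show ?thesis unfolding d2 e by linarith
qed

lemma cis_diff_norm: "cmod (cis a - cis b) = 2 * \<bar>sin ((a - b)/2)\<bar>"
proof -
  have "(cmod (cis a - cis b))\<^sup>2 = 2 - 2 * cos (a - b)"
    unfolding cmod_power2 by (simp add: power2_eq_square cos_diff algebra_simps)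
  also have "\<dots> = (2 * \<bar>sin ((a - b)/2)\<bar>)\<^sup>2"
  proof -
    have h: "2 * ((a-b)/2) = a - b" by simp
    show ?thesis using cos_double_sin[of "(a-b)/2"] unfolding h by (simp add: power2_eq_square)
  qed
  finally show ?thesis by (rule power2_eq_imp_eq) auto
qed

lemma sin_mult_ge:
  fixes M l :: nat
  assumes "1 \<le> l" "l < M"
  shows "sin (pi * l / M) \<ge> sin (pi / M)"
proof (cases "2 * l \<le> M")
  case True
  have f1: "pi / M \<le> pi * l / M" using assms by (simp add: divide_right_mono)
  have f2: "pi * l / M \<le> pi / 2" using True assms by (simp add: field_simps)
  have f0: "0 \<le> pi / M" by simp
  show ?thesis by (rule sin_monotone_2pi_le[OF _ f1 f2]) (use f0 pi_ge_zero in linarith)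
next
  case False
  have eq: "sin (pi * l / M) = sin (pi * (M - l) / M)"
  proof -
    have "pi * real (M - l) / M = pi - pi * l / M" using assms by (simp add: of_nat_diff field_simps)
    thus ?thesis by (simp add: sin_diff)
  qed
  have f1: "pi / M \<le> pi * (M - l) / M" using assms by (simp add: divide_right_mono)
  have f2: "pi * (M - l) / M \<le> pi / 2" using False assms by (simp add: of_nat_diff field_simps)
  have f0: "0 \<le> pi / M" by simp
  show ?thesis unfolding eq by (rule sin_monotone_2pi_le[OF _ f1 f2]) (use f0 pi_ge_zero in linarith)
qed

lemma min_dist_roots:
  fixes M n n' :: nat
  assumes "n < M" "n' < M" "n \<noteq> n'"
  shows "cmod (cis (2*pi*n/M) - cis (2*pi*n'/M)) \<ge> 2 * sin (pi / M)"
proof -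
  have gen: "cmod (cis (2*pi*a/M) - cis (2*pi*b/M)) \<ge> 2 * sin (pi / M)" if ab: "b < a" "a < M" for a b :: nat
  proof -
    have "cmod (cis (2*pi*a/M) - cis (2*pi*b/M)) = 2 * \<bar>sin (pi * (a - b) / M)\<bar>"
    proof -
      have "(2*pi*a/M - 2*pi*b/M)/2 = pi * real (a - b) / M" using ab by (simp add: of_nat_diff field_simps)
      thus ?thesis unfolding cis_diff_norm by simp
    qed
    also have "sin (pi * (a - b) / M) \<ge> sin (pi / M)" using ab by (intro sin_mult_ge) auto
    hence "2 * \<bar>sin (pi * (a - b) / M)\<bar> \<ge> 2 * sin (pi / M)" by linarith
    finally show ?thesis .
  qed
  show ?thesis
  proof (cases "n' < n")
    case True thus ?thesis using gen assms by blast
  next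
    case False
    hence "n < n'" using assms by simp
    hence "cmod (cis (2*pi*n'/M) - cis (2*pi*n/M)) \<ge> 2 * sin (pi / M)" using gen assms by blast
    thus ?thesis by (simp add: norm_minus_commute)
  qed
qed


lemma pigeon:
  fixes d :: nat and Z :: "complex set"
  assumes "d \<ge> 2" "finite Z" "card Z < d"
  shows "\<exists>j<d. \<forall>k<d. \<forall>u\<in>Z. cmod (cis (2*pi*real (d*k+j)/real (d*d)) - u) \<ge> sin (pi / real (d*d))"
proof (rule ccontr)
  let ?s = "sin (pi / real (d*d))"
  let ?P = "\<lambda>j k. cis (2*pi*real (d*k+j)/real (d*d))"
  assume "\<not> ?thesis"
  hence "\<forall>j<d. \<exists>u. u \<in> Z \<and> (\<exists>k<d. cmod (?P j k - u) < ?s)" by (simp add: not_le) blast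
  then obtain f where f: "\<And>j. j < d \<Longrightarrow> f j \<in> Z \<and> (\<exists>k<d. cmod (?P j k - f j) < ?s)" by metis
  have inj: "inj_on f {..<d}"
  proof (rule inj_onI, rule ccontr)
    fix j j' assume j: "j \<in> {..<d}" and j': "j' \<in> {..<d}" and eq: "f j = f j'" and ne: "j \<noteq> j'"
    obtain k where k: "k < d" "cmod (?P j k - f j) < ?s" using f j by auto
    obtain k' where k': "k' < d" "cmod (?P j' k' - f j') < ?s" using f j' by auto
    have ltg: "d*a+b < d*d" if "a < d" "b < d" for a b :: nat
    proof -
      have "d*a+b < d*Suc a" using that by simp
      also have "d*Suc a \<le> d*d" using that by (intro mult_le_mono2) simp
      finally show ?thesis .
    qed
    have lt: "d*k+j < d*d" "d*k'+j' < d*d" using j j' k(1) k'(1) ltg by auto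
    have neq: "d*k+j \<noteq> d*k'+j'"
    proof
      assume "d*k+j = d*k'+j'"
      hence "(d*k+j) mod d = (d*k'+j') mod d" by simp
      thus False using j j' ne by simp
    qed
    have "2 * ?s \<le> cmod (?P j k - ?P j' k')" using min_dist_roots[OF lt neq] by simp
    also have "\<dots> \<le> cmod (?P j k - f j) + cmod (f j' - ?P j' k')"
      using eq norm_triangle_ineq[of "?P j k - f j" "f j - ?P j' k'"] by simp
    also have "\<dots> < 2 * ?s" using k k' by (simp add: norm_minus_commute)
    finally show False by simp
  qed
  have "f ` {..<d} \<subseteq> Z" using f by auto
  hence "card {..<d} \<le> card Z" using card_inj_on_le[OF inj] assms(2) by blast
  thus False using assms(3) by simp
qed

lemma far_root:
  assumes "cmod w = 1" "z \<noteq> 0" "cmod (w - z / of_real (cmod z)) \<ge> s" "s \<ge> 0" "s \<le> 1"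
  shows "cmod (w - z) \<ge> sqrt (s\<^sup>2 - s^4/4) * max 1 (cmod z)"
proof -
  let ?u = "z / of_real (cmod z)"
  have u: "cmod ?u = 1" using assms(2) by (simp add: norm_divide)
  have zu: "z = of_real (cmod z) * ?u" using assms(2) by simp
  have "(cmod (w - of_real (cmod z) * ?u))\<^sup>2 \<ge> (s\<^sup>2 - s^4/4) * (max 1 (cmod z))\<^sup>2"
    by (rule LB1[OF assms(1) u assms(3,4)]) simp
  hence "(cmod (w - z))\<^sup>2 \<ge> (s\<^sup>2 - s^4/4) * (max 1 (cmod z))\<^sup>2" using zu by metis
  hence "sqrt ((s\<^sup>2 - s^4/4) * (max 1 (cmod z))\<^sup>2) \<le> cmod (w - z)"
    by (metis norm_ge_zero real_sqrt_abs real_sqrt_le_mono abs_of_nonneg)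
  moreover have "sqrt ((s\<^sup>2 - s^4/4) * (max 1 (cmod z))\<^sup>2) = sqrt (s\<^sup>2 - s^4/4) * max 1 (cmod z)"
    by (simp add: real_sqrt_mult)
  ultimately show ?thesis by simp
qed

lemma poly_lower:
  fixes P :: "complex poly"
  assumes "P \<noteq> 0" "cmod w = 1" "0 \<le> \<tau>" "\<tau> \<le> 1/2"
    "\<And>z. poly P z = 0 \<Longrightarrow> z \<noteq> 0 \<Longrightarrow> cmod (w - z) \<ge> 2*\<tau>*max 1 (cmod z)"
    "cmod w' = 1"
  shows "cmod (poly P w) \<ge> \<tau>^(degree P) * cmod (poly P w')"
  using assms
proof (induction "degree P" arbitrary: P)
  case 0
  then obtain c where "P = [:c:]" by (metis degree_eq_zeroE)
  thus ?case by simp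
next
  case (Suc n)
  have "\<not> constant (poly P)" using Suc(2) constant_degree by (metis nat.distinct(1))
  then obtain z where z: "poly P z = 0" using fundamental_theorem_of_algebra by blast
  then obtain Q where Q: "P = [:-z, 1:] * Q" using poly_eq_0_iff_dvd by (metis dvdE)
  have Q0: "Q \<noteq> 0" using Suc(3) Q by auto
  have pw: "poly P x = (x - z) * poly Q x" for x
  proof -
    have "poly P x = poly [:-z, 1:] x * poly Q x" unfolding Q by (rule poly_mult)
    thus ?thesis by simp
  qed
  have "degree ([:-z, 1:] * Q) = degree [:-z, 1:] + degree Q" by (rule degree_mult_eq) (use Q0 in auto)
  hence dQ: "degree P = Suc (degree Q)" using Q by simp
  have rootsQ: "\<And>x. poly Q x = 0 \<Longrightarrow> x \<noteq> 0 \<Longrightarrow> cmod (w - x) \<ge> 2*\<tau>*max 1 (cmod x)"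
    using Suc(7) Q by auto
  have IH: "cmod (poly Q w) \<ge> \<tau>^(degree Q) * cmod (poly Q w')"
    using Suc(1)[of Q] Suc(2) dQ Q0 Suc(4,5,6,8) rootsQ by auto
  have fac: "cmod (w - z) \<ge> \<tau> * (1 + cmod z)"
  proof (cases "z = 0")
    case True thus ?thesis using Suc(4,5,6) by simp
  next
    case False
    hence "cmod (w - z) \<ge> 2*\<tau>*max 1 (cmod z)" using Suc(7) z by auto
    moreover have "2*\<tau>*max 1 (cmod z) \<ge> \<tau> * (1 + cmod z)"
    proof -
      have "1 + cmod z \<le> 2*max 1 (cmod z)" by (simp add: max_def)
      from mult_left_mono[OF this Suc(5)] show ?thesis by (simp add: mult_ac)
    qed
    ultimately show ?thesis by linarith
  qed
  have up: "cmod (w' - z) \<le> 1 + cmod z" using norm_triangle_ineq4[of w' z] Suc(8) by simp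
  have "\<tau>^(degree P) * cmod (poly P w') = \<tau> * \<tau>^(degree Q) * (cmod (w' - z) * cmod (poly Q w'))"
    using dQ by (simp add: pw norm_mult)
  also have "\<dots> \<le> \<tau> * \<tau>^(degree Q) * ((1 + cmod z) * cmod (poly Q w'))"
    using up Suc(5) by (intro mult_left_mono mult_right_mono) auto
  also have "\<dots> = (\<tau> * (1 + cmod z)) * (\<tau>^(degree Q) * cmod (poly Q w'))" by (simp add: mult_ac)
  also have "\<dots> \<le> cmod (w - z) * cmod (poly Q w)"
    using fac IH Suc(5) by (intro mult_mono) auto
  also have "\<dots> = cmod (poly P w)" by (simp add: pw norm_mult)
  finally show ?case .
qed


lemma mean_sq:
  assumes "d \<ge> 1"
  shows "(\<Sum>i\<in>{1..2*d-1}. (cmod (peval d c (omega d^i)))\<^sup>2) = real (2*d-1) * (\<Sum>a<d. (cmod (c a))\<^sup>2)"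
proof -
  have "complex_of_real (\<Sum>i\<in>{1..2*d-1}. (cmod (peval d c (omega d^i)))\<^sup>2)
      = (\<Sum>i\<in>{1..2*d-1}. bil d (\<lambda>a b. c a * cnj (c b)) (omega d^i))"
    by (simp only: of_real_sum complex_norm_square G_bil)
  also have "\<dots> = of_nat (2*d-1) * (\<Sum>a<d. c a * cnj (c a))" by (rule bil_mean[OF assms])
  also have "\<dots> = complex_of_real (real (2*d-1) * (\<Sum>a<d. (cmod (c a))\<^sup>2))"
    by (simp only: of_real_mult of_real_sum complex_norm_square of_real_of_nat_eq)
  finally show ?thesis using of_real_eq_iff by blast
qed

lemma exists_big:
  assumes "d \<ge> 1" "pnorm2 d c = 1"
  shows "\<exists>w'. cmod w' = 1 \<and> cmod (peval d c w') \<ge> 1"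
proof (rule ccontr)
  assume "\<not> ?thesis"
  hence lt: "cmod (peval d c (omega d^i)) < 1" for i by (auto simp: omega_def norm_power not_le)
  have s1: "(\<Sum>a<d. (cmod (c a))\<^sup>2) = 1" using assms(2) unfolding pnorm2_def
    by (metis real_sqrt_eq_1_iff)
  have "(\<Sum>i\<in>{1..2*d-1}. (cmod (peval d c (omega d^i)))\<^sup>2) < (\<Sum>i\<in>{1..2*d-1}. 1)"
    using assms(1) lt by (intro sum_strict_mono) (auto simp: power_less_one_iff abs_square_less_1)
  thus False unfolding mean_sq[OF assms(1)] s1 by simp
qed

lemma good_point:
  assumes "d \<ge> 2" "pnorm2 d c = 1"
  defines "s \<equiv> sin (pi / real (d*d))"
  defines "\<tau> \<equiv> sqrt (s\<^sup>2 - s^4/4) / 2"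
  shows "\<exists>j<d. \<forall>k<d. cmod (peval d c (cis (2*pi*real (d*k+j)/real (d*d)))) \<ge> \<tau>^(d-1)"
proof -
  define P where "P = (\<Sum>a<d. monom (c a) a)"
  have polyP: "poly P z = peval d c z" for z unfolding P_def peval_def by (simp add: poly_sum poly_monom)
  have coeffP: "coeff P a = c a" if "a < d" for a
    unfolding P_def using that by (simp add: coeff_sum coeff_monom)
  have s1: "(\<Sum>a<d. (cmod (c a))\<^sup>2) = 1" using assms(2) unfolding pnorm2_def
    by (metis real_sqrt_eq_1_iff)
  have "\<exists>a<d. c a \<noteq> 0"
  proof (rule ccontr)
    assume "\<not> ?thesis" hence "(\<Sum>a<d. (cmod (c a))\<^sup>2) = 0" by simp
    thus False using s1 by simp
  qed
  then obtain a where "a < d" "c a \<noteq> 0" by blast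
  hence P0: "P \<noteq> 0" using coeffP by (metis coeff_0)
  have degP: "degree P \<le> d - 1" unfolding P_def
    by (rule degree_sum_le) (auto intro: order_trans[OF degree_monom_le])
  let ?R = "{z. poly P z = 0}"
  have finR: "finite ?R" by (rule poly_roots_finite[OF P0])
  have cardR: "card ?R \<le> d - 1" using card_poly_roots_bound[OF P0] degP by linarith
  define Z where "Z = (\<lambda>z. z / of_real (cmod z)) ` (?R - {0})"
  have finZ: "finite Z" unfolding Z_def using finR by simp
  have "card Z \<le> card (?R - {0})" unfolding Z_def by (rule card_image_le) (use finR in simp)
  also have "\<dots> \<le> card ?R" by (rule card_mono[OF finR]) auto
  finally have cardZ: "card Z < d" using cardR assms(1) by linarith
  obtain j where j: "j < d" and jg: "\<forall>k<d. \<forall>u\<in>Z. cmod (cis (2*pi*real (d*k+j)/real (d*d)) - u) \<ge> s"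
    using pigeon[OF assms(1) finZ cardZ] unfolding s_def by blast
  have d1: "(1::real) \<le> real d" using assms(1) by simp
  have dd: "real (d*d) \<ge> 1" using mult_mono[OF d1 d1] by simp
  have "pi / real (d*d) \<le> pi / 1" using dd by (intro divide_left_mono) auto
  hence s0: "0 \<le> s" unfolding s_def by (intro sin_ge_zero) auto
  have s_le: "s \<le> 1" unfolding s_def by simp
  have s2: "s\<^sup>2 \<le> 1" using s0 s_le by (simp add: power_le_one)
  have nonneg: "0 \<le> s\<^sup>2 - s^4/4"
  proof -
    have "s^4 = s\<^sup>2 * s\<^sup>2" by (simp add: power2_eq_square power4_eq_xxxx)
    also have "\<dots> \<le> s\<^sup>2 * 1" using s2 by (intro mult_left_mono) auto
    finally have "s^4 \<le> s\<^sup>2" by simp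
    moreover have "0 \<le> s\<^sup>2" by simp
    ultimately show ?thesis by linarith
  qed
  have tau0: "0 \<le> \<tau>" unfolding \<tau>_def using nonneg by simp
  have tau1: "\<tau> \<le> 1/2"
  proof -
    have "0 \<le> s^4" by simp
    hence "s\<^sup>2 - s^4/4 \<le> 1" using s2 by linarith
    hence "sqrt (s\<^sup>2 - s^4/4) \<le> 1" by simp
    thus ?thesis unfolding \<tau>_def by simp
  qed
  obtain w' where w': "cmod w' = 1" "cmod (peval d c w') \<ge> 1" using exists_big[OF _ assms(2)] assms(1) by auto
  show ?thesis
  proof (intro exI[of _ j] conjI j allI impI)
    fix k assume k: "k < d"
    let ?w = "cis (2*pi*real (d*k+j)/real (d*d))"
    have far: "cmod (?w - z) \<ge> 2*\<tau>*max 1 (cmod z)" if "poly P z = 0" "z \<noteq> 0" for z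
    proof -
      have "z / of_real (cmod z) \<in> Z" unfolding Z_def using that by auto
      hence "cmod (?w - z / of_real (cmod z)) \<ge> s" using jg k by blast
      from far_root[OF norm_cis that(2) this s0 s_le] show ?thesis unfolding \<tau>_def by simp
    qed
    have "cmod (poly P ?w) \<ge> \<tau>^(degree P) * cmod (poly P w')"
      by (rule poly_lower[OF P0 norm_cis tau0 tau1 far w'(1)]) auto
    moreover have "\<tau>^(degree P) * cmod (poly P w') \<ge> \<tau>^(degree P)"
      using w'(2) tau0 polyP by (simp add: mult_le_cancel_left1)
    moreover have "\<tau>^(degree P) \<ge> \<tau>^(d-1)" using degP tau0 tau1 by (intro power_decreasing) auto
    ultimately show "cmod (peval d c ?w) \<ge> \<tau>^(d-1)" unfolding polyP by linarith
  qed
qed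


lemma rconst_bounds:
  assumes "d \<ge> 2"
  shows "0 < rconst d" "rconst d \<le> 1"
proof -
  define D where "D = real (d-1) * (real d)^2"
  have a: "D \<ge> 4" unfolding D_def
  proof -
    have "1 \<le> real (d-1)" using assms by simp
    moreover have "(2::real)^2 \<le> (real d)^2" using assms by (intro power_mono) auto
    ultimately have "1 * 2^2 \<le> real (d-1) * (real d)^2" by (intro mult_mono) auto
    moreover have "(1::real) * 2^2 = 4" by simp
    ultimately show "4 \<le> real (d-1) * (real d)^2" by linarith
  qed
  have pos: "0 < 2 * pi / D" using a pi_gt_zero by (intro divide_pos_pos) linarith+
  have "2 * pi / D \<le> 2 * pi / 4" using a by (intro divide_left_mono) auto
  also have "\<dots> < pi" by simp
  finally show "0 < rconst d" unfolding rconst_def D_def[symmetric] using pos by (intro sin_gt_zero) auto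
  show "rconst d \<le> 1" unfolding rconst_def by simp
qed

lemma even_consec: "even ((d - 1) * (d::nat))"
  by (cases d) (auto simp: even_mult_iff)

lemma beta_expand:
  assumes "d \<ge> 2"
  shows "betaconst d = rconst d ^ ((d-1)*d div 2) * (((real d - 1)/(2*real d))^(d-1) / real d)
            / (\<Prod>k\<in>{1..d-1}. rconst d ^ k + 1)"
proof -
  let ?r = "rconst d"
  obtain m where m: "(d-1)*d = 2*m" using even_consec[of d] by (rule evenE)
  have e: "real ((d - 1) * d) / 2 = real ((d-1)*d div 2)" unfolding m by simp
  have p: "?r powr (real ((d - 1) * d) / 2) = ?r ^ ((d-1)*d div 2)"
    unfolding e using rconst_bounds[OF assms] by (simp add: powr_realpow)
  have q: "((real d - 1) / (2 * real d)) ^ d * (2 / (real d - 1)) = ((real d - 1)/(2*real d))^(d-1) / real d"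
  proof -
    have "d = Suc (d-1)" using assms by simp
    hence "((real d - 1) / (2 * real d)) ^ d = ((real d - 1) / (2 * real d)) ^ (d-1) * ((real d - 1) / (2 * real d))"
      by (metis power_Suc2)
    moreover have "real d - 1 > 0" using assms by simp
    ultimately show ?thesis by (simp add: field_simps)
  qed
  show ?thesis unfolding betaconst_def Let_def p by (simp only: mult.assoc q)
qed

lemma prod_ge1:
  assumes "0 \<le> (r::real)"
  shows "(\<Prod>k\<in>{1..n}. r ^ k + 1) \<ge> 1"
  using assms by (intro prod_ge_1) auto

lemma beta_pos:
  assumes "d \<ge> 2"
  shows "betaconst d > 0"
proof -
  have r: "0 < rconst d" using rconst_bounds[OF assms] by simp
  have "(\<Prod>k\<in>{1..d-1}. rconst d ^ k + 1) > 0" using prod_ge1[of "rconst d" "d-1"] r by linarith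
  moreover have "real d - 1 > 0" using assms by simp
  ultimately show ?thesis unfolding beta_expand[OF assms] using r assms by (intro divide_pos_pos mult_pos_pos) auto
qed

lemma beta_upper:
  assumes "d \<ge> 2"
  shows "betaconst d \<le> rconst d ^ ((d-1)*d div 2) * ((1/2)^(d-1) / real d)"
proof -
  let ?r = "rconst d"
  have r: "0 < ?r" using rconst_bounds[OF assms] by simp
  have P: "(\<Prod>k\<in>{1..d-1}. ?r ^ k + 1) \<ge> 1" using prod_ge1 r by auto
  have P0: "(\<Prod>k\<in>{1..d-1}. ?r ^ k + 1) > 0" using P by linarith
  have h: "(real d - 1)/(2*real d) \<le> 1/2" using assms by (simp add: field_simps)
  have h0: "0 \<le> (real d - 1)/(2*real d)" using assms by simp
  have X: "0 \<le> ?r ^ ((d-1)*d div 2) * (((real d - 1)/(2*real d))^(d-1) / real d)" using r h0 by simp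
  have "betaconst d \<le> ?r ^ ((d-1)*d div 2) * (((real d - 1)/(2*real d))^(d-1) / real d)"
    unfolding beta_expand[OF assms] using divide_left_mono[OF P X] P0 by simp
  also have "\<dots> \<le> ?r ^ ((d-1)*d div 2) * ((1/2)^(d-1) / real d)"
    using r h h0 by (intro mult_left_mono divide_right_mono power_mono) auto
  finally show ?thesis .
qed

lemma beta_2: "betaconst 2 = 1/16"
proof -
  have r: "rconst 2 = 1" unfolding rconst_def by simp
  show ?thesis unfolding beta_expand[of 2, simplified] r by simp
qed

lemma beta_small:
  assumes "d \<ge> 3"
  shows "betaconst d \<le> 1 / (4 * real d)"
proof -
  have d2: "d \<ge> 2" using assms by simp
  have r: "0 < rconst d" "rconst d \<le> 1" using rconst_bounds[OF d2] by auto
  have "betaconst d \<le> rconst d ^ ((d-1)*d div 2) * ((1/2)^(d-1) / real d)" by (rule beta_upper[OF d2])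
  also have "\<dots> \<le> 1 * ((1/2)^(d-1) / real d)" using r by (intro mult_right_mono power_le_one) auto
  also have "(1/2::real)^(d-1) \<le> (1/2)^2" using assms by (intro power_decreasing) auto
  hence "1 * ((1/2::real)^(d-1) / real d) \<le> (1/2)^2 / real d" by (simp add: divide_right_mono)
  also have "\<dots> = 1 / (4 * real d)" by (simp add: power2_eq_square)
  finally show ?thesis .
qed


lemma sin_lower3:
  fixes x :: real
  assumes "0 \<le> x"
  shows "sin x \<ge> x - x^3/6"
proof -
  have "\<bar>sin x - (\<Sum>m<3. sin_coeff m * x ^ m)\<bar> \<le> inverse (fact 3) * \<bar>x\<bar> ^ 3"
    by (rule Maclaurin_sin_bound)
  moreover have "(\<Sum>m<3. sin_coeff m * x ^ m) = x" by (simp add: sin_coeff_def eval_nat_numeral)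
  moreover have "inverse (fact 3) * \<bar>x\<bar> ^ 3 = x^3/6" using assms by (simp add: eval_nat_numeral fact_numeral)
  ultimately show ?thesis by linarith
qed

lemma beta_tau:
  assumes "d \<ge> 2"
  defines "s \<equiv> sin (pi / real (d*d))"
  defines "\<tau> \<equiv> sqrt (s\<^sup>2 - s^4/4) / 2"
  shows "betaconst d \<le> \<tau>^(d-1)"
proof (cases "d = 2")
  case True
  have s: "s = sqrt 2 / 2" unfolding s_def True using sin_45 by simp
  have s2: "s\<^sup>2 = 1/2" unfolding s by (simp add: power_divide)
  have "s^4 = (s\<^sup>2)\<^sup>2" by (simp flip: power_mult)
  hence s4: "s^4 = 1/4" using s2 by (simp add: power_divide)
  have "\<tau> = sqrt (7/16) / 2" unfolding \<tau>_def s2 s4 by simp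
  moreover have "sqrt (7/16) \<ge> sqrt (1/64)" by (rule real_sqrt_le_mono) simp
  moreover have "sqrt (1/64::real) = 1/8" by (simp add: real_sqrt_divide)
  ultimately have "\<tau> \<ge> 1/16" by linarith
  thus ?thesis using True beta_2 by simp
next
  case False
  hence d3: "d \<ge> 3" using assms by simp
  let ?r = "rconst d" and ?E = "(d-1)*d div 2"
  define x where "x = pi / real (d*d)"
  have r: "0 < ?r" "?r \<le> 1" using rconst_bounds[OF assms(1)] by auto
  have dd: "real (d*d) \<ge> 9"
  proof -
    have "(3::real) * 3 \<le> real d * real d" using d3 by (intro mult_mono) auto
    thus ?thesis by simp
  qed
  have x0: "0 < x" unfolding x_def using dd by simp
  have x_le: "x \<le> 4/9"
  proof -
    have "x \<le> pi / 9" unfolding x_def using dd by (intro divide_left_mono) auto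
    thus ?thesis using pi_less_4 by linarith
  qed
  have rx: "?r \<le> x"
  proof -
    define Q where "Q = real (d - 1) * (real d)^2"
    have "2 \<le> real (d-1)" using d3 by simp
    hence "2 * (real d)^2 \<le> real (d-1) * (real d)^2" by (rule mult_right_mono) simp
    hence D: "Q \<ge> 2 * real (d*d)" unfolding Q_def by (simp add: power2_eq_square)
    have pos: "0 < real (d*d)" using dd by simp
    have "?r \<le> 2 * pi / Q" unfolding rconst_def Q_def[symmetric]
      by (rule sin_x_le_x) (use D pos in auto)
    also have "\<dots> \<le> 2 * pi / (2 * real (d*d))" using D pos by (intro divide_left_mono) auto
    also have "\<dots> = x" unfolding x_def by simp
    finally show ?thesis .
  qed
  have sx: "s \<ge> 5/6 * x"
  proof -
    have "s \<ge> x - x^3/6" unfolding s_def x_def[symmetric] using x0 by (intro sin_lower3) auto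
    moreover have "x^3 \<le> x" using x0 x_le by (simp add: power_le_one eval_nat_numeral mult_le_cancel_left1 power2_eq_square mult_le_one)
    ultimately show ?thesis by linarith
  qed
  have s0: "0 \<le> s" using sx x0 by linarith
  have s1: "s \<le> 1" unfolding s_def by simp
  have s4: "s^4 \<le> s\<^sup>2" using s0 s1 by (simp add: power_decreasing)
  have key: "?r ^ d \<le> s\<^sup>2 - s^4/4"
  proof -
    have "?r ^ d \<le> ?r ^ 3" using r d3 by (intro power_decreasing) auto
    also have "\<dots> \<le> x ^ 3" using r rx by (intro power_mono) auto
    also have "\<dots> = x * x\<^sup>2" by (simp add: eval_nat_numeral)
    also have "\<dots> \<le> (25/48) * x\<^sup>2" using x_le by (intro mult_right_mono) auto
    also have "\<dots> = (3/4) * (5/6 * x)\<^sup>2" by (simp add: power2_eq_square)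
    also have "\<dots> \<le> (3/4) * s\<^sup>2" using sx x0 by (intro mult_left_mono power_mono) auto
    also have "\<dots> \<le> s\<^sup>2 - s^4/4" using s4 by linarith
    finally show ?thesis .
  qed
  have nonneg: "0 \<le> s\<^sup>2 - s^4/4" using key r by (meson order_trans zero_le_power less_imp_le)
  have tau2: "\<tau>\<^sup>2 = (s\<^sup>2 - s^4/4) / 4" unfolding \<tau>_def using nonneg by (simp add: power_divide)
  have tau0: "0 \<le> \<tau>" unfolding \<tau>_def using nonneg by simp
  have b: "betaconst d \<le> ?r ^ ?E * (1/2)^(d-1)"
  proof -
    have "betaconst d \<le> ?r ^ ?E * ((1/2)^(d-1) / real d)" by (rule beta_upper[OF assms(1)])
    also have "\<dots> \<le> ?r ^ ?E * ((1/2)^(d-1) / 1)" using r assms by (intro mult_left_mono divide_left_mono) auto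
    finally show ?thesis by simp
  qed
  have E2: "2 * ?E = d * (d-1)" using even_consec[of d] by (simp add: mult.commute)
  have "(?r ^ ?E * (1/2)^(d-1))\<^sup>2 = (?r ^ d / 4) ^ (d-1)"
  proof -
    have "(?r ^ ?E)\<^sup>2 = ?r ^ (2 * ?E)" by (simp add: power_mult[symmetric] mult.commute)
    also have "\<dots> = (?r ^ d) ^ (d-1)" unfolding E2 by (simp add: power_mult)
    finally have 1: "(?r ^ ?E)\<^sup>2 = (?r ^ d) ^ (d-1)" .
    have 2: "((1/2::real)^(d-1))\<^sup>2 = (1/4)^(d-1)" by (simp add: power_mult[symmetric] power_even_eq[symmetric] mult.commute) (simp add: power_mult power2_eq_square)
    have "(?r ^ ?E * (1/2)^(d-1))\<^sup>2 = (?r ^ ?E)\<^sup>2 * ((1/2::real)^(d-1))\<^sup>2" by (rule power_mult_distrib)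
    also have "\<dots> = (?r ^ d) ^ (d-1) * (1/4)^(d-1)" by (simp only: 1 2)
    also have "\<dots> = (?r ^ d / 4) ^ (d-1)" by (simp add: power_divide)
    finally show ?thesis .
  qed
  also have "\<dots> \<le> ((s\<^sup>2 - s^4/4) / 4) ^ (d-1)" using key r by (intro power_mono divide_right_mono) auto
  also have "\<dots> = (\<tau>^(d-1))\<^sup>2" unfolding tau2[symmetric] by (simp add: power_mult[symmetric] mult.commute)
  finally have sq: "(?r ^ ?E * (1/2)^(d-1))\<^sup>2 \<le> (\<tau>^(d-1))\<^sup>2" .
  have "?r ^ ?E * (1/2)^(d-1) \<le> \<tau>^(d-1)" by (rule power2_le_imp_le[OF sq zero_le_power[OF tau0]])
  thus ?thesis using b by linarith
qed


definition ph :: "complex \<Rightarrow> complex" where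
  "ph w = (if w = 0 then 1 else w / of_real (cmod w))"

lemma ph_norm: "cmod (ph w) = 1"
  unfolding ph_def by (auto simp: norm_divide)

lemma ph_approx: "cmod (of_real (cmod a) * ph w - a) \<le> 2 * cmod (w - a)"
proof (cases "w = 0")
  case True
  have "cmod (of_real (cmod a) - a) \<le> cmod (of_real (cmod a)) + cmod a" by (rule norm_triangle_ineq4)
  thus ?thesis using True by (simp add: ph_def)
next
  case False
  have e: "of_real (cmod a) * ph w - a = (of_real (cmod a) * ph w - w) + (w - a)" by simp
  have h1: "of_real (cmod a) * ph w - w = of_real (cmod a - cmod w) * ph w"
    using False by (simp add: ph_def algebra_simps)
  have "cmod (of_real (cmod a) * ph w - w) = \<bar>cmod a - cmod w\<bar>"
    unfolding h1 by (simp only: norm_mult ph_norm norm_of_real mult_1_right)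
  also have "\<dots> \<le> cmod (w - a)" by (metis norm_minus_commute norm_triangle_ineq3)
  finally have "cmod (of_real (cmod a) * ph w - w) \<le> cmod (w - a)" .
  thus ?thesis unfolding e using norm_triangle_ineq[of "of_real (cmod a) * ph w - w" "w - a"] by linarith
qed

lemma sqrt_approx:
  assumes "g \<ge> b\<^sup>2" "b > 0" "\<bar>g - x\<^sup>2\<bar> \<le> E1" "x \<ge> 0"
  shows "\<bar>sqrt g - x\<bar> \<le> E1 / b"
proof -
  have g0: "g \<ge> 0" using assms(1) by (meson order_trans zero_le_power2)
  have sg: "sqrt g \<ge> b" by (rule real_le_rsqrt) (use assms(1) in simp)
  have pos: "sqrt g + x > 0" using sg assms(2,4) by linarith
  have s2: "(sqrt g)\<^sup>2 = g" using g0 by (rule real_sqrt_pow2)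
  have "(sqrt g - x) * (sqrt g + x) = (sqrt g)\<^sup>2 - x\<^sup>2" by (simp add: power2_eq_square algebra_simps)
  hence eq: "(sqrt g - x) * (sqrt g + x) = g - x\<^sup>2" unfolding s2 .
  have "\<bar>sqrt g - x\<bar> * (sqrt g + x) = \<bar>g - x\<^sup>2\<bar>" unfolding eq[symmetric] abs_mult using pos by simp
  hence "\<bar>sqrt g - x\<bar> = \<bar>g - x\<^sup>2\<bar> / (sqrt g + x)" using pos by (simp add: field_simps)
  also have "\<dots> \<le> E1 / (sqrt g + x)" using assms(3) pos by (intro divide_right_mono) auto
  also have "\<dots> \<le> E1 / b"
  proof (rule divide_left_mono)
    show "0 \<le> E1" using assms(3) by linarith
    show "b \<le> sqrt g + x" using sg assms(4) by linarith
    show "0 < (sqrt g + x) * b" using pos assms(2) by simp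
  qed
  finally show ?thesis .
qed

lemma step_lemma:
  assumes c0: "cmod c0 = 1" and g: "g \<ge> b\<^sup>2" and b: "b > 0" and gE: "\<bar>g - (cmod a)\<^sup>2\<bar> \<le> E1"
    and vk: "cmod vk \<ge> b" and F: "cmod (Fk - uk * cnj a) \<le> E2" and U: "cmod a \<le> U"
  shows "cmod (of_real (sqrt g) * ph (cnj Fk / cnj vk) - c0 * a) \<le> E1/b + 2*((E2 + U * cmod (vk - c0*uk))/b)"
proof -
  let ?w = "cnj Fk / cnj vk" and ?a = "c0 * a"
  have vk0: "vk \<noteq> 0" using vk b by auto
  have na: "cmod ?a = cmod a" using c0 by (simp add: norm_mult)
  have cc: "c0 * cnj c0 = 1" using c0 by (metis complex_norm_square mult.commute of_real_1 power_one)
  have "(?w - ?a) * cnj vk = cnj (Fk - uk * cnj a) + ?a * (cnj (c0 * uk) - cnj vk)"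
  proof -
    have "(?w - ?a) * cnj vk = cnj Fk - ?a * cnj vk" using vk0 by (simp add: field_simps)
    moreover have "?a * cnj (c0 * uk) = (c0 * cnj c0) * (a * cnj uk)" by (simp add: mult_ac)
    ultimately show ?thesis using cc by (simp add: algebra_simps)
  qed
  hence "cmod (?w - ?a) * cmod vk = cmod (cnj (Fk - uk * cnj a) + ?a * (cnj (c0 * uk) - cnj vk))"
    by (metis norm_mult complex_mod_cnj)
  also have "\<dots> \<le> cmod (cnj (Fk - uk * cnj a)) + cmod (?a * (cnj (c0 * uk) - cnj vk))" by (rule norm_triangle_ineq)
  also have "cmod (?a * (cnj (c0 * uk) - cnj vk)) = cmod a * cmod (vk - c0 * uk)"
    by (metis na norm_mult complex_cnj_diff complex_mod_cnj norm_minus_commute)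
  also have "cmod (cnj (Fk - uk * cnj a)) \<le> E2" using F by (simp only: complex_mod_cnj)
  hence "cmod (cnj (Fk - uk * cnj a)) + cmod a * cmod (vk - c0 * uk) \<le> E2 + cmod a * cmod (vk - c0 * uk)" by linarith
  also have "\<dots> \<le> E2 + U * cmod (vk - c0 * uk)" using U by (intro add_left_mono mult_right_mono) auto
  finally have "cmod (?w - ?a) * cmod vk \<le> E2 + U * cmod (vk - c0 * uk)" .
  hence wa: "cmod (?w - ?a) \<le> (E2 + U * cmod (vk - c0 * uk)) / b"
  proof -
    have X: "0 \<le> E2 + U * cmod (vk - c0 * uk)"
      using \<open>cmod (?w - ?a) * cmod vk \<le> E2 + U * cmod (vk - c0 * uk)\<close> by (meson mult_nonneg_nonneg norm_ge_zero order_trans)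
    have "cmod (?w - ?a) * b \<le> cmod (?w - ?a) * cmod vk" using vk by (intro mult_left_mono) auto
    hence "cmod (?w - ?a) * b \<le> E2 + U * cmod (vk - c0 * uk)"
      using \<open>cmod (?w - ?a) * cmod vk \<le> E2 + U * cmod (vk - c0 * uk)\<close> by linarith
    thus ?thesis using b by (simp add: le_divide_eq)
  qed
  have sq: "\<bar>sqrt g - cmod ?a\<bar> \<le> E1 / b" unfolding na by (rule sqrt_approx[OF g b gE]) simp
  have e: "of_real (sqrt g) * ph ?w - ?a = of_real (sqrt g - cmod ?a) * ph ?w + (of_real (cmod ?a) * ph ?w - ?a)"
    by (simp add: algebra_simps)
  have n1: "cmod (of_real (sqrt g - cmod ?a) * ph ?w) = \<bar>sqrt g - cmod ?a\<bar>"
    by (simp only: norm_mult ph_norm norm_of_real mult_1_right)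
  have "cmod (of_real (sqrt g) * ph ?w - ?a) \<le> \<bar>sqrt g - cmod ?a\<bar> + cmod (of_real (cmod ?a) * ph ?w - ?a)"
    unfolding e n1[symmetric] by (rule norm_triangle_ineq)
  also have "\<dots> \<le> E1 / b + 2 * cmod (?w - ?a)" using sq ph_approx[of ?a ?w] by linarith
  also have "\<dots> \<le> E1 / b + 2 * ((E2 + U * cmod (vk - c0 * uk)) / b)" using wa by linarith
  finally show ?thesis .
qed


lemma polar:
  "a * cnj b = (complex_of_real ((cmod a)\<^sup>2 + (cmod b)\<^sup>2 - (cmod (a - b))\<^sup>2)
      + \<i> * complex_of_real ((cmod a)\<^sup>2 + (cmod b)\<^sup>2 - (cmod (a - \<i> * b))\<^sup>2)) / 2"
  unfolding cmod_power2 by (simp add: complex_eq_iff power2_eq_square algebra_simps)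

lemma key_sum:
  fixes d :: nat and \<rho> C lam :: real
  assumes d: "d \<ge> 2" and rho: "\<rho> \<ge> 1" and C: "C \<ge> lam * \<rho>"
    and cases: "(d = 2 \<and> lam \<ge> 11.28 \<and> \<rho> \<ge> 45) \<or> (d \<ge> 3 \<and> lam \<ge> 2 * real d)"
  shows "2 * (2 * real (2*d-1) + 5) * (\<Sum>i<d. \<rho>^i) \<le> real d * (\<Sum>i<d. C^i)"
  using cases
proof
  assume h: "d = 2 \<and> lam \<ge> 11.28 \<and> \<rho> \<ge> 45"
  hence "C \<ge> 11.28 * \<rho>" using C rho by (smt (verit) mult_right_mono)
  thus ?thesis using h by (simp add: numeral_2_eq_2)
next
  assume h: "d \<ge> 3 \<and> lam \<ge> 2 * real d"
  have lam1: "lam \<ge> 1" using h by simp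
  have C0: "C \<ge> 0" using C lam1 rho by (smt (verit) mult_nonneg_nonneg)
  have "(\<Sum>i<d. \<rho>^i) \<le> (\<Sum>i<d. \<rho>^(d-1))"
    using rho by (intro sum_mono power_increasing) auto
  also have "\<dots> = real d * \<rho>^(d-1)" by simp
  finally have s1: "(\<Sum>i<d. \<rho>^i) \<le> real d * \<rho>^(d-1)" .
  have "C^(d-1) \<le> (\<Sum>i<d. C^i)"
    using C0 d by (intro member_le_sum) auto
  have "4 * (real d)^2 * \<rho>^(d-1) = (2 * real d)^2 * \<rho>^(d-1)" by (simp add: power2_eq_square)
  also have "\<dots> \<le> lam^2 * \<rho>^(d-1)" using h rho by (intro mult_right_mono power_mono) auto
  also have "\<dots> \<le> lam^(d-1) * \<rho>^(d-1)" using lam1 h rho by (intro mult_right_mono power_increasing) auto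
  also have "\<dots> = (lam * \<rho>)^(d-1)" by (simp add: power_mult_distrib)
  also have "\<dots> \<le> C^(d-1)" using C lam1 rho by (intro power_mono) auto
  finally have "4 * (real d)^2 * \<rho>^(d-1) \<le> (\<Sum>i<d. C^i)" using \<open>C^(d-1) \<le> (\<Sum>i<d. C^i)\<close> by linarith
  hence "real d * (4 * (real d)^2 * \<rho>^(d-1)) \<le> real d * (\<Sum>i<d. C^i)" by (intro mult_left_mono) auto
  moreover have "real d * (4 * (real d)^2 * \<rho>^(d-1)) = 4 * (real d)^3 * \<rho>^(d-1)"
    by (simp add: power2_eq_square power3_eq_cube mult_ac)
  ultimately have s2: "4 * (real d)^3 * \<rho>^(d-1) \<le> real d * (\<Sum>i<d. C^i)" by linarith
  have "2 * (2 * real (2*d-1) + 5) \<le> 4 * (real d)^2"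
  proof -
    have "real (2*d-1) = 2 * real d - 1" using d by simp
    moreover have "8 * real d + 6 \<le> 4 * (real d)^2"
    proof -
      have "real d \<ge> 3" using h by simp
      hence "(real d - 3) * (4 * real d + 4) \<ge> 0" by simp
      thus ?thesis by (simp add: power2_eq_square algebra_simps)
    qed
    ultimately show ?thesis by simp
  qed
  hence "2 * (2 * real (2*d-1) + 5) * (real d * \<rho>^(d-1)) \<le> 4 * (real d)^2 * (real d * \<rho>^(d-1))"
    using rho by (intro mult_right_mono) auto
  also have "\<dots> = 4 * (real d)^3 * \<rho>^(d-1)" by (simp add: power2_eq_square power3_eq_cube)
  finally have s3: "2 * (2 * real (2*d-1) + 5) * (real d * \<rho>^(d-1)) \<le> real d * (\<Sum>i<d. C^i)" using s2 by linarith
  have "2 * (2 * real (2*d-1) + 5) * (\<Sum>i<d. \<rho>^i) \<le> 2 * (2 * real (2*d-1) + 5) * (real d * \<rho>^(d-1))"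
    using s1 by (intro mult_left_mono) auto
  thus ?thesis using s3 by linarith
qed


lemma final_ineq:
  fixes d :: nat and \<alpha> e :: real
  assumes d: "d \<ge> 2" and a0: "0 < \<alpha>" and a1: "\<alpha> < 1" and e0: "0 \<le> e"
  shows "real (2*d-1) * (2 * real (2*d-1) + 5) * e / (betaconst d * sqrt (1-\<alpha>))
           * (\<Sum>i<d. (2 * sqrt (real d) / (betaconst d * sqrt (1-\<alpha>)))^i)
    \<le> (let \<beta> = betaconst d; C = ((1 + sqrt 2) * real (2 * d - 1) * e + real d) / (\<beta>\<^sup>2 * (1 - \<alpha>)) in
       ((2 + sqrt 2) / (\<beta>\<^sup>2 * (1 - \<alpha>)) * ((real d - real d * C - 1 + C ^ d) / (1 - C)) * sqrt (real d)
              + (1 - C ^ d) / (2 * \<beta> * sqrt ((1 / sqrt (real d)) * (1 - \<alpha>))))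
             * (real d * real (2 * d - 1) / (1 - C)) * e)"
proof -
  define \<beta> where "\<beta> = betaconst d"
  define N where "N = real (2*d-1)"
  define sa where "sa = sqrt (1-\<alpha>)"
  define b where "b = \<beta> * sa"
  define \<rho> where "\<rho> = 2 * sqrt (real d) / b"
  define C where "C = ((1 + sqrt 2) * real (2 * d - 1) * e + real d) / (\<beta>\<^sup>2 * (1 - \<alpha>))"
  define sq where "sq = sqrt ((1 / sqrt (real d)) * (1 - \<alpha>))"
  have \<beta>0: "\<beta> > 0" unfolding \<beta>_def using beta_pos[OF d] .
  have \<beta>16: "\<beta> \<le> 1/12"
  proof (cases "d = 2")
    case True thus ?thesis unfolding \<beta>_def using beta_2 by simp
  next
    case False
    hence "d \<ge> 3" using d by simp
    hence "\<beta> \<le> 1 / (4 * real d)" unfolding \<beta>_def by (rule beta_small)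
    also have "\<dots> \<le> 1 / (4 * 3)" using \<open>d \<ge> 3\<close> by (intro divide_left_mono) auto
    finally show ?thesis by simp
  qed
  have sa0: "sa > 0" unfolding sa_def using a1 by simp
  have sa1: "sa \<le> 1" unfolding sa_def using a0 by simp
  have b0: "b > 0" unfolding b_def using \<beta>0 sa0 by simp
  have b\<beta>: "b \<le> \<beta>" unfolding b_def using \<beta>0 sa1 by (simp add: mult_left_le)
  have b2: "b\<^sup>2 = \<beta>\<^sup>2 * (1 - \<alpha>)" unfolding b_def sa_def using a1 by (simp add: power_mult_distrib)
  have N0: "N > 0" unfolding N_def using d by simp
  have sd: "sqrt (real d) * sqrt (real d) = real d" by simp
  have Cge: "C \<ge> real d / b\<^sup>2"
    unfolding C_def b2[symmetric] using e0 b0 by (intro divide_right_mono) auto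
  have "b\<^sup>2 \<le> (1/12)\<^sup>2" using b0 b\<beta> \<beta>16 by (intro power_mono) auto
  hence "real d / b\<^sup>2 \<ge> 2 / (1/12)\<^sup>2" using d b0 by (intro frac_le) auto
  moreover have "(2::real) / (1/12)\<^sup>2 = 288" by (simp add: power2_eq_square)
  ultimately have C1: "C > 1" using Cge by linarith
  have geo: "(1 - C^d) / (1 - C) = (\<Sum>i<d. C^i)" using C1 by (simp add: sum_gp_strict)
  have bern: "real d - real d * C - 1 + C^d \<ge> 0"
  proof -
    have "1 + real d * (C - 1) \<le> (1 + (C - 1))^d" using C1 by (intro Bernoulli_inequality) simp
    thus ?thesis by (simp add: algebra_simps)
  qed
  define T1 where "T1 = (2 + sqrt 2) / (\<beta>\<^sup>2 * (1 - \<alpha>)) * ((real d - real d * C - 1 + C ^ d) / (1 - C)) * sqrt (real d)"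
  define T2 where "T2 = (1 - C ^ d) / (2 * \<beta> * sq)"
  define K where "K = real d * N / (1 - C)"
  have K0: "K \<le> 0" unfolding K_def using C1 N0 by (intro divide_nonneg_neg) auto
  have T10: "T1 \<le> 0" unfolding T1_def using C1 bern a1 \<beta>0
    by (intro mult_nonpos_nonneg mult_nonneg_nonpos divide_nonneg_neg) auto
  have T1K: "T1 * K * e \<ge> 0" using T10 K0 e0 by (simp add: mult_nonpos_nonpos)
  have sq0: "sq > 0" unfolding sq_def using a1 d by simp
  have sqsa: "sq \<le> sa" unfolding sq_def sa_def
  proof (rule real_sqrt_le_mono)
    have "1 / sqrt (real d) \<le> 1" using d by simp
    from mult_right_mono[OF this, of "1 - \<alpha>"] a1
    show "1 / sqrt (real d) * (1 - \<alpha>) \<le> 1 - \<alpha>" by simp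
  qed
  have T2K: "T2 * K = real d * N * (\<Sum>i<d. C^i) / (2 * \<beta> * sq)"
  proof -
    have "T2 * K = (1 - C^d) / (1 - C) * (real d * N) / (2 * \<beta> * sq)"
      unfolding T2_def K_def by (simp add: field_simps)
    thus ?thesis unfolding geo by simp
  qed
  have SC0: "(\<Sum>i<d. C^i) \<ge> 0" using C1 by (intro sum_nonneg) auto
  have T2Kb: "T2 * K \<ge> real d * N * (\<Sum>i<d. C^i) / (2 * b)"
    unfolding T2K b_def using \<beta>0 sq0 sqsa SC0 N0
    by (intro divide_left_mono mult_left_mono mult_nonneg_nonneg) auto
  have lamrho: "C \<ge> (sqrt (real d) / (2 * b)) * \<rho>"
  proof -
    have "(sqrt (real d) / (2 * b)) * \<rho> = real d / b\<^sup>2" unfolding \<rho>_def using b0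
      by (simp add: power2_eq_square field_simps)
    thus ?thesis using Cge by simp
  qed
  have s2: "sqrt 2 \<ge> 1.41" by (rule real_le_rsqrt) (simp add: power2_eq_square)
  have rho1: "\<rho> \<ge> 1"
  proof -
    have "sqrt (real d) \<ge> 1" using d by simp
    hence "2 * sqrt (real d) / b \<ge> 2 * 1 / (1/12)"
      using b0 b\<beta> \<beta>16 by (intro frac_le) auto
    thus ?thesis unfolding \<rho>_def by simp
  qed
  have cases: "(d = 2 \<and> sqrt (real d) / (2 * b) \<ge> 11.28 \<and> \<rho> \<ge> 45) \<or> (d \<ge> 3 \<and> sqrt (real d) / (2 * b) \<ge> 2 * real d)"
  proof (cases "d = 2")
    case True
    have b16: "b \<le> 1/16" using b\<beta> beta_2 True unfolding \<beta>_def by simp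
    have "sqrt (real d) / (2 * b) \<ge> 1.41 / (2 * (1/16))"
      using True s2 b0 b16 by (intro frac_le) auto
    moreover have "2 * sqrt (real d) / b \<ge> 2 * 1.41 / (1/16)"
      using True s2 b0 b16 by (intro frac_le) auto
    ultimately show ?thesis using True unfolding \<rho>_def by simp
  next
    case False
    hence d3: "d \<ge> 3" using d by simp
    have "b \<le> 1 / (4 * real d)" using b\<beta> beta_small[OF d3] unfolding \<beta>_def by linarith
    hence "sqrt (real d) / (2 * b) \<ge> 1 / (2 * (1 / (4 * real d)))"
      using b0 d by (intro frac_le) auto
    thus ?thesis using d3 by simp
  qed
  have ks: "2 * (2 * N + 5) * (\<Sum>i<d. \<rho>^i) \<le> real d * (\<Sum>i<d. C^i)"
    unfolding N_def by (rule key_sum[OF d rho1 lamrho cases])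
  have "N * (2 * N + 5) * e / b * (\<Sum>i<d. \<rho>^i) = (N * e / (2 * b)) * (2 * (2 * N + 5) * (\<Sum>i<d. \<rho>^i))"
    using b0 by (simp add: field_simps)
  also have "\<dots> \<le> (N * e / (2 * b)) * (real d * (\<Sum>i<d. C^i))"
    using ks N0 e0 b0 by (intro mult_left_mono) auto
  also have "\<dots> = real d * N * (\<Sum>i<d. C^i) / (2 * b) * e" using b0 by (simp add: field_simps)
  also have "\<dots> \<le> T2 * K * e" using T2Kb e0 by (intro mult_right_mono) auto
  also have "\<dots> \<le> T1 * K * e + T2 * K * e" using T1K by simp
  also have "\<dots> = (T1 + T2) * K * e" by (simp add: algebra_simps)
  finally show ?thesis unfolding Let_def T1_def T2_def K_def sq_def C_def[symmetric] \<beta>_def[symmetric] N_def b_def sa_def \<rho>_def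
    by simp
qed


lemma peval_bound:
  assumes "cmod z = 1" "pnorm2 d c = 1"
  shows "cmod (peval d c z) \<le> sqrt (real d)"
proof -
  have s1: "(\<Sum>a<d. (cmod (c a))\<^sup>2) = 1" using assms(2) unfolding pnorm2_def by (metis real_sqrt_eq_1_iff)
  have "cmod (peval d c z) \<le> (\<Sum>a<d. cmod (c a * z^a))" unfolding peval_def by (rule norm_sum)
  also have "\<dots> = (\<Sum>a<d. cmod (c a))" using assms(1) by (simp add: norm_mult norm_power)
  finally have 1: "cmod (peval d c z) \<le> (\<Sum>a<d. cmod (c a))" .
  have "(\<Sum>a<d. cmod (c a))\<^sup>2 \<le> (\<Sum>a<d. (cmod (c a))\<^sup>2) * card {..<d}" by (rule sum_squared_le_sum_of_squares)
  hence "(\<Sum>a<d. cmod (c a))\<^sup>2 \<le> real d" using s1 by simp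
  hence "(\<Sum>a<d. cmod (c a)) \<le> sqrt (real d)" by (rule real_le_rsqrt)
  thus ?thesis using 1 by linarith
qed

lemma omega_N: "d \<ge> 1 \<Longrightarrow> omega d ^ (2*d-1) = 1"
proof -
  assume d: "d \<ge> 1"
  have "omega d ^ (2*d-1) = cis (real (2*d-1) * (2*pi/real (2*d-1)))" unfolding omega_def by (rule Complex.DeMoivre)
  also have "real (2*d-1) * (2*pi/real (2*d-1)) = 2*pi" using d by simp
  finally show ?thesis by simp
qed

lemma omega_norm: "cmod (omega d ^ i) = 1" by (simp add: omega_def norm_power)
lemma nu_norm: "cmod (nu d) = 1" by (simp add: nu_def)

lemma meas1: "1 \<le> i \<Longrightarrow> i \<le> 2*d-1 \<Longrightarrow> meas d c i = (cmod (peval d c (omega d ^ i)))\<^sup>2"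
  unfolding meas_def by simp

lemma meas2:
  assumes "d \<ge> 1" "1 \<le> i" "i \<le> 2*d-1"
  shows "meas d c (2*d-1+i) = (cmod (peval d c (omega d ^ i) - peval d c (omega d ^ i * nu d)))\<^sup>2"
proof -
  have w: "omega d ^ (2*d-1+i) = omega d ^ i" using omega_N[OF assms(1)] by (simp add: power_add)
  have h1: "\<not> (1 \<le> 2*d-1+i \<and> 2*d-1+i \<le> 2*d-1)" using assms by arith
  have h2: "2*d \<le> 2*d-1+i \<and> 2*d-1+i \<le> 4*d-2" using assms by arith
  show ?thesis unfolding meas_def if_not_P[OF h1] if_P[OF h2] w ..
qed

lemma meas3:
  assumes "d \<ge> 1" "1 \<le> i" "i \<le> 2*d-1"
  shows "meas d c (2*(2*d-1)+i) = (cmod (peval d c (omega d ^ i) - \<i> * peval d c (omega d ^ i * nu d)))\<^sup>2"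
proof -
  have e: "2*(2*d-1)+i = (2*d-1)*2+i" by simp
  have w: "omega d ^ (2*(2*d-1)+i) = omega d ^ i" unfolding e power_add power_mult omega_N[OF assms(1)] by simp
  have h1: "\<not> (1 \<le> 2*(2*d-1)+i \<and> 2*(2*d-1)+i \<le> 2*d-1)" using assms by arith
  have h2: "\<not> (2*d \<le> 2*(2*d-1)+i \<and> 2*(2*d-1)+i \<le> 4*d-2)" using assms by arith
  have h3: "4*d-1 \<le> 2*(2*d-1)+i \<and> 2*(2*d-1)+i \<le> 6*d-3" using assms by arith
  show ?thesis unfolding meas_def if_not_P[OF h1] if_not_P[OF h2] if_P[OF h3] w ..
qed

lemma noisy: "1 \<le> j \<Longrightarrow> j \<le> 6*d-3 \<Longrightarrow> noisy_meas d c eps j = meas d c j + eps j"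
  unfolding noisy_meas_def by simp

lemma supnorm_ge:
  assumes "d \<ge> 1" "1 \<le> j" "j \<le> 6*d-3"
  shows "\<bar>eps j\<bar> \<le> supnorm d eps"
  unfolding supnorm_def using assms by (intro Max_ge) auto

definition Gt :: "nat \<Rightarrow> (nat \<Rightarrow> real) \<Rightarrow> complex \<Rightarrow> complex" where
  "Gt d y z = interp d (\<lambda>i. complex_of_real (y i)) z"
definition Fh :: "nat \<Rightarrow> (nat \<Rightarrow> real) \<Rightarrow> nat \<Rightarrow> complex" where
  "Fh d y i = (complex_of_real (y i) + Gt d y (omega d ^ i * nu d) - complex_of_real (y (2*d-1+i))
     + \<i> * (complex_of_real (y i) + Gt d y (omega d ^ i * nu d) - complex_of_real (y (2*(2*d-1)+i)))) / 2"
definition Ft :: "nat \<Rightarrow> (nat \<Rightarrow> real) \<Rightarrow> complex \<Rightarrow> complex" where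
  "Ft d y z = interp d (Fh d y) z"
definition xp :: "nat \<Rightarrow> nat \<Rightarrow> nat \<Rightarrow> complex" where
  "xp d j k = cis (2*pi*real j/real (d*d)) * nu d ^ k"
definition phi :: "nat \<Rightarrow> (nat \<Rightarrow> real) \<Rightarrow> nat \<Rightarrow> real" where
  "phi d y j = Min ((\<lambda>k. Re (Gt d y (xp d j k))) ` {..<d})"
definition js :: "nat \<Rightarrow> (nat \<Rightarrow> real) \<Rightarrow> nat" where
  "js d y = (SOME j. j < d \<and> (\<forall>j'<d. phi d y j' \<le> phi d y j))"
fun vr :: "nat \<Rightarrow> (nat \<Rightarrow> real) \<Rightarrow> nat \<Rightarrow> complex" where
  "vr d y 0 = complex_of_real (sqrt (Re (Gt d y (xp d (js d y) 0))))"
| "vr d y (Suc k) = complex_of_real (sqrt (Re (Gt d y (xp d (js d y) (Suc k)))))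
      * ph (cnj (Ft d y (xp d (js d y) k)) / cnj (vr d y k))"
definition Rm :: "nat \<Rightarrow> (nat \<Rightarrow> real) \<Rightarrow> nat \<Rightarrow> complex" where
  "Rm d y a = (if a < d then (\<Sum>k<d. vr d y k * cnj (xp d (js d y) k)^a) / of_nat d else 0)"

lemma xp_norm: "cmod (xp d j k) = 1" by (simp add: xp_def norm_mult norm_power nu_norm)
lemma xp_Suc: "xp d j (Suc k) = xp d j k * nu d" by (simp add: xp_def mult_ac)
lemma xp_cis:
  assumes "d \<ge> 1"
  shows "cis (2*pi*real (d*k+j)/real (d*d)) = xp d j k"
proof -
  have "nu d ^ k = cis (real k * (2*pi/real d))" unfolding nu_def by (rule Complex.DeMoivre)
  hence "xp d j k = cis (2*pi*real j/real (d*d) + real k * (2*pi/real d))" unfolding xp_def by (simp add: cis_mult)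
  also have "2*pi*real j/real (d*d) + real k * (2*pi/real d) = 2*pi*real (d*k+j)/real (d*d)"
    using assms by (simp add: field_simps)
  finally show ?thesis by simp
qed

lemma js_prop:
  assumes "d \<ge> 1"
  shows "js d y < d \<and> (\<forall>j'<d. phi d y j' \<le> phi d y (js d y))"
proof -
  have "0 \<in> {..<d}" using assms by simp
  hence fin: "finite (phi d y ` {..<d})" "phi d y ` {..<d} \<noteq> {}" by auto
  obtain j where j: "j < d" "phi d y j = Max (phi d y ` {..<d})"
    using Max_in[OF fin] by auto
  have "j < d \<and> (\<forall>j'<d. phi d y j' \<le> phi d y j)" using j fin by auto
  hence "\<exists>j. j < d \<and> (\<forall>j'<d. phi d y j' \<le> phi d y j)" by blast
  thus ?thesis unfolding js_def by (rule someI_ex)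
qed


lemma main_bound:
  fixes d :: nat and \<alpha> :: real and p :: "nat \<Rightarrow> complex" and eps :: "nat \<Rightarrow> real"
  assumes d: "d \<ge> 2" and a0: "0 < \<alpha>" and a1: "\<alpha> < 1" and pn: "pnorm2 d p = 1"
    and eb: "supnorm d eps \<le> \<alpha> * (betaconst d)\<^sup>2 / real (2*d-1)"
  shows "\<exists>c0. cmod c0 = 1 \<and> pnorm2 d (\<lambda>k. Rm d (noisy_meas d p eps) k - c0 * p k)
     \<le> real (2*d-1) * (2 * real (2*d-1) + 5) * supnorm d eps / (betaconst d * sqrt (1-\<alpha>))
           * (\<Sum>i<d. (2 * sqrt (real d) / (betaconst d * sqrt (1-\<alpha>)))^i)"
proof -
  define y where "y = noisy_meas d p eps"
  define e where "e = supnorm d eps"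
  define N where "N = 2*d-1"
  define Nr where "Nr = real N"
  define \<beta> where "\<beta> = betaconst d"
  define P where "P = peval d p"
  define G where "G = (\<lambda>z. P z * cnj (P z))"
  define F where "F = (\<lambda>z. P z * cnj (P (z * nu d)))"
  have d1: "d \<ge> 1" using d by simp
  have Nr0: "Nr > 0" unfolding Nr_def N_def using d by simp
  have epsb: "\<And>j. 1 \<le> j \<Longrightarrow> j \<le> 6*d-3 \<Longrightarrow> \<bar>eps j\<bar> \<le> e" using supnorm_ge[OF d1] unfolding e_def by blast
  have "1 \<le> 6*d-3" using d by arith
  hence e0: "0 \<le> e" using epsb[of 1] by (meson abs_ge_zero order_trans le_refl)
  have yi: "y i = (cmod (P (omega d^i)))\<^sup>2 + eps i" if "1 \<le> i" "i \<le> N" for i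
  proof -
    have i6: "i \<le> 6*d-3" using that d unfolding N_def by arith
    show ?thesis unfolding y_def P_def using noisy[OF that(1) i6] meas1[OF that(1)] that(2) unfolding N_def by simp
  qed
  have y2: "y (N+i) = (cmod (P (omega d^i) - P (omega d^i * nu d)))\<^sup>2 + eps (N+i)" if "1 \<le> i" "i \<le> N" for i
  proof -
    have "1 \<le> N+i" "N+i \<le> 6*d-3" using that d unfolding N_def by arith+
    thus ?thesis unfolding y_def P_def using noisy meas2[OF d1 that[unfolded N_def]] unfolding N_def by simp
  qed
  have y3: "y (2*N+i) = (cmod (P (omega d^i) - \<i> * P (omega d^i * nu d)))\<^sup>2 + eps (2*N+i)" if "1 \<le> i" "i \<le> N" for i
  proof -
    have "1 \<le> 2*N+i" "2*N+i \<le> 6*d-3" using that d unfolding N_def by arith+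
    thus ?thesis unfolding y_def P_def using noisy meas3[OF d1 that[unfolded N_def]] unfolding N_def by simp
  qed
  have Gof: "G z = complex_of_real ((cmod (P z))\<^sup>2)" for z unfolding G_def by (rule complex_norm_square[symmetric])
  have Grep: "interp d (\<lambda>i. G (omega d^i)) z = G z" if "cmod z = 1" for z
    unfolding G_def P_def G_bil by (rule reproduce[OF d1 that])
  have Frep: "interp d (\<lambda>i. F (omega d^i)) z = F z" if "cmod z = 1" for z
    unfolding F_def P_def F_bil by (rule reproduce[OF d1 that])
  have Gerr: "cmod (Gt d y z - G z) \<le> Nr * e" if "cmod z = 1" for z
  proof -
    have "Gt d y z - G z = interp d (\<lambda>i. complex_of_real (y i) - G (omega d^i)) z"
      unfolding Gt_def interp_diff Grep[OF that] ..
    also have "cmod \<dots> \<le> real (2*d-1) * e"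
    proof (rule interp_bound[OF d1 that])
      fix i assume i: "i \<in> {1..2*d-1}"
      hence "complex_of_real (y i) - G (omega d^i) = complex_of_real (eps i)"
        using yi[of i] unfolding Gof N_def by auto
      thus "cmod (complex_of_real (y i) - G (omega d^i)) \<le> e" using epsb[of i] i d by auto
    qed
    finally show ?thesis unfolding Nr_def N_def .
  qed
  have Fherr: "cmod (Fh d y i - F (omega d^i)) \<le> (Nr+2) * e" if i: "1 \<le> i" "i \<le> N" for i
  proof -
    define a where "a = P (omega d^i)"
    define bb where "bb = P (omega d^i * nu d)"
    define D where "D = Gt d y (omega d^i * nu d) - G (omega d^i * nu d)"
    have Dn: "cmod D \<le> Nr * e" unfolding D_def by (rule Gerr) (simp add: norm_mult omega_norm nu_norm)
    have GB: "G (omega d^i * nu d) = complex_of_real ((cmod bb)\<^sup>2)" unfolding Gof bb_def ..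
    have "i \<le> 6*d-3" "1 \<le> N+i" "N+i \<le> 6*d-3" "1 \<le> 2*N+i" "2*N+i \<le> 6*d-3"
      using i d unfolding N_def by arith+
    hence e1: "\<bar>eps i\<bar> \<le> e" "\<bar>eps (N+i)\<bar> \<le> e" "\<bar>eps (2*N+i)\<bar> \<le> e"
      using epsb i by auto
    define X where "X = complex_of_real (eps i) + D - complex_of_real (eps (N+i))"
    define Y where "Y = complex_of_real (eps i) + D - complex_of_real (eps (2*N+i))"
    have gt: "Gt d y (omega d^i * nu d) = complex_of_real ((cmod bb)\<^sup>2) + D" unfolding D_def GB by simp
    have Fw: "F (omega d^i) = a * cnj bb" unfolding F_def a_def bb_def ..
    have eqn: "Fh d y i - F (omega d^i) = (X + \<i> * Y) / 2"
      unfolding Fh_def Fw polar[of a bb] X_def Y_def N_def[symmetric]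
      unfolding yi[OF i] y2[OF i] y3[OF i] a_def[symmetric] bb_def[symmetric] gt
      by (simp add: field_simps)
    have "cmod (Fh d y i - F (omega d^i)) = cmod (X + \<i> * Y) / 2" unfolding eqn norm_divide by simp
    also have "\<dots> \<le> (cmod X + cmod Y) / 2"
      using norm_triangle_ineq[of X "\<i> * Y"] by (intro divide_right_mono) (auto simp: norm_mult)
    finally have "cmod (Fh d y i - F (omega d^i)) \<le> (cmod X + cmod Y) / 2" .
    moreover have "cmod X \<le> e + Nr * e + e" unfolding X_def
      using norm_triangle_ineq4[of "complex_of_real (eps i) + D" "complex_of_real (eps (N+i))"]
        norm_triangle_ineq[of "complex_of_real (eps i)" D] Dn e1 by simp
    moreover have "cmod Y \<le> e + Nr * e + e" unfolding Y_def
      using norm_triangle_ineq4[of "complex_of_real (eps i) + D" "complex_of_real (eps (2*N+i))"]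
        norm_triangle_ineq[of "complex_of_real (eps i)" D] Dn e1 by simp
    ultimately show ?thesis by (simp add: algebra_simps)
  qed
  have Ferr: "cmod (Ft d y z - F z) \<le> Nr * ((Nr+2) * e)" if "cmod z = 1" for z
  proof -
    have "Ft d y z - F z = interp d (\<lambda>i. Fh d y i - F (omega d^i)) z"
      unfolding Ft_def interp_diff Frep[OF that] ..
    also have "cmod \<dots> \<le> real (2*d-1) * ((Nr+2) * e)"
    proof (rule interp_bound[OF d1 that])
      fix i assume i: "i \<in> {1..2*d-1}"
      thus "cmod (Fh d y i - F (omega d^i)) \<le> (Nr+2) * e" using Fherr[of i] unfolding N_def by auto
    qed
    finally show ?thesis unfolding Nr_def N_def .
  qed
  define s where "s = sin (pi / real (d*d))"
  define \<tau> where "\<tau> = sqrt (s\<^sup>2 - s^4/4) / 2"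
  obtain j0 where j0: "j0 < d" and j0g: "\<forall>k<d. cmod (P (xp d j0 k)) \<ge> \<tau>^(d-1)"
    using good_point[OF d pn] unfolding s_def[symmetric] \<tau>_def[symmetric] xp_cis[OF d1] P_def by blast
  have \<beta>\<tau>: "\<beta> \<le> \<tau>^(d-1)" unfolding \<beta>_def \<tau>_def s_def by (rule beta_tau[OF d])
  have \<beta>0: "\<beta> > 0" unfolding \<beta>_def by (rule beta_pos[OF d])
  have NeB: "Nr * e \<le> \<alpha> * \<beta>\<^sup>2"
    using eb Nr0 unfolding e_def \<beta>_def Nr_def N_def by (simp add: le_divide_eq mult.commute)
  have ReG: "Re (Gt d y z) \<ge> (cmod (P z))\<^sup>2 - Nr * e" "\<bar>Re (Gt d y z) - (cmod (P z))\<^sup>2\<bar> \<le> Nr * e"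
    if "cmod z = 1" for z
  proof -
    have "\<bar>Re (Gt d y z - G z)\<bar> \<le> Nr * e" using Gerr[OF that] abs_Re_le_cmod order_trans by blast
    moreover have "Re (G z) = (cmod (P z))\<^sup>2" unfolding Gof by simp
    ultimately show "Re (Gt d y z) \<ge> (cmod (P z))\<^sup>2 - Nr * e" "\<bar>Re (Gt d y z) - (cmod (P z))\<^sup>2\<bar> \<le> Nr * e"
      by auto
  qed
  define j where "j = js d y"
  have j: "j < d" "\<forall>j'<d. phi d y j' \<le> phi d y j" using js_prop[OF d1] unfolding j_def by auto
  have fin: "finite ((\<lambda>k. Re (Gt d y (xp d jj k))) ` {..<d})" "(\<lambda>k. Re (Gt d y (xp d jj k))) ` {..<d} \<noteq> {}" for jj
  proof -
    have "0 \<in> {..<d}" using d1 by simp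
    thus "finite ((\<lambda>k. Re (Gt d y (xp d jj k))) ` {..<d})" "(\<lambda>k. Re (Gt d y (xp d jj k))) ` {..<d} \<noteq> {}" by auto
  qed
  have phi0: "phi d y j0 \<ge> \<beta>\<^sup>2 - Nr * e"
    unfolding phi_def
  proof (subst Min_ge_iff[OF fin], clarsimp)
    fix k assume k: "k < d"
    have "\<beta>\<^sup>2 \<le> (cmod (P (xp d j0 k)))\<^sup>2" using j0g k \<beta>\<tau> \<beta>0 by (intro power_mono) auto
    thus "\<beta>\<^sup>2 - Nr * e \<le> Re (Gt d y (xp d j0 k))" using ReG(1)[OF xp_norm] by smt
  qed
  define b where "b = \<beta> * sqrt (1-\<alpha>)"
  have b0: "b > 0" unfolding b_def using \<beta>0 a1 by simp
  have b2: "b\<^sup>2 = \<beta>\<^sup>2 * (1 - \<alpha>)" unfolding b_def using a1 by (simp add: power_mult_distrib)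
  define x where "x = xp d j"
  define u where "u = (\<lambda>k. P (x k))"
  define g where "g = (\<lambda>k. Re (Gt d y (x k)))"
  have gb: "g k \<ge> b\<^sup>2" if "k < d" for k
  proof -
    have "g k \<ge> phi d y j" unfolding g_def x_def phi_def using that fin by (intro Min_le) auto
    moreover have "phi d y j \<ge> phi d y j0" using j j0 by auto
    moreover have "\<beta>\<^sup>2 - Nr * e \<ge> b\<^sup>2" unfolding b2 using NeB by (simp add: algebra_simps)
    ultimately show ?thesis using phi0 by linarith
  qed
  have gerr: "\<bar>g k - (cmod (u k))\<^sup>2\<bar> \<le> Nr * e" for k unfolding g_def u_def using ReG(2)[OF xp_norm] x_def by simp
  have vr0: "vr d y 0 = complex_of_real (sqrt (g 0))" unfolding g_def x_def j_def by simp
  have vrS: "vr d y (Suc k) = complex_of_real (sqrt (g (Suc k))) * ph (cnj (Ft d y (x k)) / cnj (vr d y k))" for k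
    unfolding g_def x_def j_def by simp
  have sqb: "sqrt (g k) \<ge> b" if "k < d" for k using gb[OF that] by (intro real_le_rsqrt)
  have vn: "cmod (vr d y k) \<ge> b" if "k < d" for k
  proof (cases k)
    case 0 have "b \<le> sqrt (g 0)" using sqb[OF that] 0 by simp
    thus ?thesis using b0 unfolding 0 vr0 norm_of_real by linarith
  next
    case (Suc k') have "b \<le> sqrt (g (Suc k'))" using sqb[OF that] Suc by simp
    thus ?thesis using b0 unfolding Suc vrS norm_mult ph_norm norm_of_real by linarith
  qed
  define c0 where "c0 = (if u 0 = 0 then 1 else complex_of_real (cmod (u 0)) / u 0)"
  have c0n: "cmod c0 = 1" by (auto simp: c0_def norm_divide)
  have c0u: "c0 * u 0 = complex_of_real (cmod (u 0))" by (auto simp: c0_def)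
  define \<gamma> where "\<gamma> = Nr * (2*Nr+5) * e / b"
  define \<rho> where "\<rho> = 2 * sqrt (real d) / b"
  have \<rho>0: "\<rho> \<ge> 0" unfolding \<rho>_def using b0 by simp
  have \<gamma>0: "\<gamma> \<ge> 0" unfolding \<gamma>_def using b0 Nr0 e0 by simp
  have Ub: "cmod (u k) \<le> sqrt (real d)" for k unfolding u_def P_def x_def by (rule peval_bound[OF xp_norm pn])
  have xS: "x (Suc k) = x k * nu d" for k unfolding x_def by (rule xp_Suc)
  have del: "cmod (vr d y k - c0 * u k) \<le> \<gamma> * (\<Sum>i<Suc k. \<rho>^i)" if "k < d" for k
    using that
  proof (induction k)
    case 0
    have "cmod (vr d y 0 - c0 * u 0) = \<bar>sqrt (g 0) - cmod (u 0)\<bar>"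
      unfolding vr0 c0u by (simp flip: of_real_diff)
    also have "\<dots> \<le> Nr * e / b" by (rule sqrt_approx[OF gb[OF 0] b0 gerr norm_ge_zero])
    also have "\<dots> \<le> \<gamma>"
    proof -
      have "e \<le> (2 * Nr + 5) * e" using Nr0 e0 by (simp add: mult_le_cancel_right1 algebra_simps) 
      hence "Nr * e \<le> Nr * (2 * Nr + 5) * e" using Nr0 by (simp add: mult.assoc mult_left_mono)
      thus ?thesis unfolding \<gamma>_def using b0 by (intro divide_right_mono) auto
    qed
    finally show ?case by simp
  next
    case (Suc k)
    have k: "k < d" using Suc by simp
    have Fk: "cmod (Ft d y (x k) - u k * cnj (u (Suc k))) \<le> Nr * ((Nr+2) * e)"
      using Ferr[OF xp_norm[of d j k]] unfolding F_def u_def x_def xp_Suc by simp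
    have "cmod (vr d y (Suc k) - c0 * u (Suc k)) \<le> Nr * e / b + 2 * ((Nr * ((Nr+2) * e) + sqrt (real d) * cmod (vr d y k - c0 * u k)) / b)"
      unfolding vrS by (rule step_lemma[OF c0n gb[OF Suc.prems] b0 gerr vn[OF k] Fk Ub])
    also have "\<dots> = \<gamma> + \<rho> * cmod (vr d y k - c0 * u k)"
      unfolding \<gamma>_def \<rho>_def using b0 by (simp add: field_simps)
    also have "\<dots> \<le> \<gamma> + \<rho> * (\<gamma> * (\<Sum>i<Suc k. \<rho>^i))"
      using Suc.IH[OF k] \<rho>0 by (intro add_left_mono mult_left_mono) auto
    also have "\<dots> = \<gamma> * (\<Sum>i<Suc (Suc k). \<rho>^i)"
      by (simp only: sum.lessThan_Suc_shift power_Suc sum_distrib_left) (simp add: algebra_simps sum_distrib_left)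
    finally show ?case .
  qed
  define \<Delta> where "\<Delta> = \<gamma> * (\<Sum>i<d. \<rho>^i)"
  have \<Delta>0: "\<Delta> \<ge> 0" unfolding \<Delta>_def using \<gamma>0 \<rho>0 by (intro mult_nonneg_nonneg sum_nonneg) auto
  have delD: "cmod (vr d y k - c0 * u k) \<le> \<Delta>" if "k < d" for k
  proof -
    have "(\<Sum>i<Suc k. \<rho>^i) \<le> (\<Sum>i<d. \<rho>^i)" using that \<rho>0 by (intro sum_mono2) auto
    hence "\<gamma> * (\<Sum>i<Suc k. \<rho>^i) \<le> \<Delta>" unfolding \<Delta>_def using \<gamma>0 by (intro mult_left_mono) auto
    thus ?thesis using del[OF that] by linarith
  qed
  define z0 where "z0 = cis (2*pi*real j/real (d*d))"
  have xz: "x k = z0 * nu d ^ k" for k unfolding x_def xp_def z0_def ..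
  have z0n: "cmod z0 = 1" unfolding z0_def by simp
  define dc where "dc = (\<lambda>k. vr d y k - c0 * u k)"
  have Rdiff: "Rm d y a - c0 * p a = (\<Sum>k<d. dc k * cnj (z0 * nu d^k)^a) / of_nat d" if "a < d" for a
  proof -
    have pa: "p a = (\<Sum>k<d. u k * cnj (z0 * nu d^k)^a) / of_nat d"
      unfolding u_def xz P_def by (rule dft_reproduce[OF d1 z0n that, symmetric])
    have Ra: "Rm d y a = (\<Sum>k<d. vr d y k * cnj (z0 * nu d^k)^a) / of_nat d"
      unfolding Rm_def using that xz unfolding x_def j_def by simp
    show ?thesis unfolding Ra pa dc_def
      by (simp add: sum_subtractf sum_distrib_left diff_divide_distrib algebra_simps)
  qed
  have "pnorm2 d (\<lambda>a. Rm d y a - c0 * p a) = sqrt (\<Sum>a<d. (cmod ((\<Sum>k<d. dc k * cnj (z0 * nu d^k)^a) / of_nat d))\<^sup>2)"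
    unfolding pnorm2_def by (simp add: Rdiff)
  also have "\<dots> = sqrt ((\<Sum>k<d. (cmod (dc k))\<^sup>2) / real d)" by (simp only: dft_parseval[OF d1 z0n])
  also have "\<dots> \<le> sqrt (\<Delta>\<^sup>2)"
  proof (rule real_sqrt_le_mono)
    have "(\<Sum>k<d. (cmod (dc k))\<^sup>2) \<le> (\<Sum>k<d. \<Delta>\<^sup>2)"
      using delD unfolding dc_def by (intro sum_mono power_mono) auto
    also have "\<dots> = real d * \<Delta>\<^sup>2" by simp
    finally show "(\<Sum>k<d. (cmod (dc k))\<^sup>2) / real d \<le> \<Delta>\<^sup>2" using d1 by (simp add: divide_le_eq mult.commute)
  qed
  also have "\<dots> = \<Delta>" using \<Delta>0 by simp
  finally have fin_bound: "pnorm2 d (\<lambda>a. Rm d y a - c0 * p a) \<le> \<Delta>" .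
  show ?thesis
    using c0n fin_bound unfolding \<Delta>_def \<gamma>_def \<rho>_def b_def Nr_def N_def e_def \<beta>_def y_def by blast
qed


theorem mainTheorem13:
  fixes d :: nat and \<alpha> :: real
  assumes "d \<ge> 2" and "0 < \<alpha>" and "\<alpha> < 1"
  shows "\<exists>R :: (nat \<Rightarrow> real) \<Rightarrow> (nat \<Rightarrow> complex).
    (\<forall>y. in_Pd d (R y)) \<and>
    (\<forall>p eps. in_Pd d p \<longrightarrow> pnorm2 d p = 1 \<longrightarrow>
       supnorm d eps \<le> \<alpha> * (betaconst d)\<^sup>2 / real (2 * d - 1) \<longrightarrow>
       (let \<beta> = betaconst d; e = supnorm d eps;
            C = ((1 + sqrt 2) * real (2 * d - 1) * e + real d) / (\<beta>\<^sup>2 * (1 - \<alpha>));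
            pt = R (noisy_meas d p eps)
        in \<exists>c0. cmod c0 = 1 \<and>
           pnorm2 d (\<lambda>k. pt k - c0 * p k) \<le>
             ((2 + sqrt 2) / (\<beta>\<^sup>2 * (1 - \<alpha>)) * ((real d - real d * C - 1 + C ^ d) / (1 - C)) * sqrt (real d)
              + (1 - C ^ d) / (2 * \<beta> * sqrt ((1 / sqrt (real d)) * (1 - \<alpha>))))
             * (real d * real (2 * d - 1) / (1 - C)) * e))"
proof (rule exI[of _ "Rm d"], intro conjI allI impI)
  fix y show "in_Pd d (Rm d y)" unfolding in_Pd_def Rm_def by simp
next
  fix p eps assume p: "in_Pd d p" and pn: "pnorm2 d p = 1"
    and eb: "supnorm d eps \<le> \<alpha> * (betaconst d)\<^sup>2 / real (2 * d - 1)"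
  have d1: "d \<ge> 1" using assms(1) by simp
  have "1 \<le> 6*d-3" using assms(1) by arith
  hence e0: "0 \<le> supnorm d eps" using supnorm_ge[OF d1, of 1 eps] by (meson abs_ge_zero order_trans le_refl)
  obtain c0 where c0: "cmod c0 = 1" and bnd: "pnorm2 d (\<lambda>k. Rm d (noisy_meas d p eps) k - c0 * p k)
     \<le> real (2*d-1) * (2 * real (2*d-1) + 5) * supnorm d eps / (betaconst d * sqrt (1-\<alpha>))
           * (\<Sum>i<d. (2 * sqrt (real d) / (betaconst d * sqrt (1-\<alpha>)))^i)"
    using main_bound[OF assms pn eb] by blast
  note fi = final_ineq[OF assms e0, unfolded Let_def]
  show "let \<beta> = betaconst d; e = supnorm d eps;
            C = ((1 + sqrt 2) * real (2 * d - 1) * e + real d) / (\<beta>\<^sup>2 * (1 - \<alpha>));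
            pt = Rm d (noisy_meas d p eps)
        in \<exists>c0. cmod c0 = 1 \<and>
           pnorm2 d (\<lambda>k. pt k - c0 * p k) \<le>
             ((2 + sqrt 2) / (\<beta>\<^sup>2 * (1 - \<alpha>)) * ((real d - real d * C - 1 + C ^ d) / (1 - C)) * sqrt (real d)
              + (1 - C ^ d) / (2 * \<beta> * sqrt ((1 / sqrt (real d)) * (1 - \<alpha>))))
             * (real d * real (2 * d - 1) / (1 - C)) * e"
    unfolding Let_def by (intro exI[of _ c0] conjI c0 order_trans[OF bnd fi])
qed


end
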